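(* Let $0<m\le a<n$. The $Sp(2n,\mathbb{R})$-flag domain $D_{m,a}\subset Z_m$ consisting of flags $V_1\subset V_2$ with $h|_{V_1}$ of signature $(0,m)$ and $h|_{V_2}$ of signature $(n-a,a)$ is not generically $1$-connected.
   Context: Let $\omega$ be a complex symplectic form on $\mathbb{C}^{2n}$ real on $\mathbb{R}^{2n}$, $G=Sp(2n,\mathbb{C})$, $G_0=Sp(2n,\mathbb{R})$, and $h(v,w)=\sqrt{-1}\,\omega(v,\bar w)$ the $G_0$-invariant Hermitian form of signature $(n,n)$. $Z_m$ is the $G$-flag manifold of pairs $V_1\subset V_2$ of $\omega$-isotropic subspaces with $\dim V_1=m$, $\dim V_2=n$; $D_{m,a}$ is an open $G_0$-orbit (flag domain) in $Z_m$. Generic $1$-connectivity: let $K_0\subset G_0$ be a maximal compact subgroup, $K$ its complexification; the base cycle $C_0$ is the $K_0$-orbit in $D_{m,a}$ that is a complex submanifold. For $z\in C_0$ let $Q_z\subset G$ be its isotropy group and $\mathcal{O}$ the unique open $Q_z$-orbit in $Z_m$. The flag domain is generically $1$-connected if $C_0\cap\mathcal{O}\neq\emptyset$. *)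

theory Defs
  imports "HOL-Analysis.Analysis"
begin

text \<open>The ambient space C^{2n}: vectors indexed by 'n + 'n, where CARD('n) = n.
  Index Inl i is the coordinate x_i, index Inr i is the coordinate y_i.\<close>

type_synonym 'n cvec = "complex ^ ('n + 'n)"
type_synonym 'n cmat = "complex ^ ('n + 'n) ^ ('n + 'n)"
type_synonym 'n flag = "'n cvec set \<times> 'n cvec set"

definition omega :: "'n::finite cvec \<Rightarrow> 'n cvec \<Rightarrow> complex" where
  "omega v w = (\<Sum>i\<in>UNIV. v $ Inl i * w $ Inr i - v $ Inr i * w $ Inl i)"

definition cconj :: "'n::finite cvec \<Rightarrow> 'n cvec" where
  "cconj v = (\<chi> k. cnj (v $ k))"

definition herm :: "'n::finite cvec \<Rightarrow> 'n cvec \<Rightarrow> complex" where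
  "herm v w = \<i> * omega v (cconj w)"

definition csubspace :: "'n::finite cvec set \<Rightarrow> bool" where
  "csubspace V = vec.subspace V"

definition cdim :: "'n::finite cvec set \<Rightarrow> nat" where
  "cdim V = vec.dim V"

definition isotropic :: "'n::finite cvec set \<Rightarrow> bool" where
  "isotropic V \<longleftrightarrow> (\<forall>v\<in>V. \<forall>w\<in>V. omega v w = 0)"

definition herm_signature :: "'n::finite cvec set \<Rightarrow> nat \<Rightarrow> nat \<Rightarrow> bool" where
  "herm_signature V p q \<longleftrightarrow>
     (\<exists>B. finite B \<and> vec.independent B \<and> vec.span B = V \<and>
          (\<forall>b\<in>B. \<forall>b'\<in>B. b \<noteq> b' \<longrightarrow> herm b b' = 0) \<and>
          card {b\<in>B. Re (herm b b) > 0} = p \<and>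
          card {b\<in>B. Re (herm b b) < 0} = q)"

definition Zflag :: "nat \<Rightarrow> 'n::finite flag set" where
  "Zflag m = {(V1, V2). csubspace V1 \<and> csubspace V2 \<and> V1 \<subseteq> V2 \<and>
                isotropic V1 \<and> isotropic V2 \<and>
                cdim V1 = m \<and> cdim V2 = CARD('n)}"

definition Ddom :: "nat \<Rightarrow> nat \<Rightarrow> 'n::finite flag set" where
  "Ddom m a = {(V1, V2) \<in> Zflag m.
                 herm_signature V1 0 m \<and> herm_signature V2 (CARD('n) - a) a}"

definition SpC :: "'n::finite cmat set" where
  "SpC = {g. invertible g \<and> (\<forall>v w. omega (g *v v) (g *v w) = omega v w)}"

definition SpR :: "'n::finite cmat set" where
  "SpR = {g \<in> SpC. \<forall>i j. g $ i $ j \<in> \<real>}"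

definition act :: "'n::finite cmat \<Rightarrow> 'n flag \<Rightarrow> 'n flag" where
  "act g z = ((*v) g ` fst z, (*v) g ` snd z)"

definition orbit :: "'n::finite cmat set \<Rightarrow> 'n flag \<Rightarrow> 'n flag set" where
  "orbit H z = (\<lambda>g. act g z) ` H"

definition matgroup :: "'n::finite cmat set \<Rightarrow> bool" where
  "matgroup H \<longleftrightarrow> mat 1 \<in> H \<and> (\<forall>x\<in>H. \<forall>y\<in>H. x ** y \<in> H) \<and>
                   (\<forall>x\<in>H. invertible x \<and> matrix_inv x \<in> H)"

definition max_compact_subgroup :: "'n::finite cmat set \<Rightarrow> bool" where
  "max_compact_subgroup K0 \<longleftrightarrow>
     K0 \<subseteq> SpR \<and> matgroup K0 \<and> compact K0 \<and>
     (\<forall>H. H \<subseteq> SpR \<and> matgroup H \<and> compact H \<and> K0 \<subseteq> H \<longrightarrow> H = K0)"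

primrec mpow :: "'n::finite cmat \<Rightarrow> nat \<Rightarrow> 'n cmat" where
  "mpow X 0 = mat 1"
| "mpow X (Suc k) = X ** mpow X k"

definition mexp :: "'n::finite cmat \<Rightarrow> 'n cmat" where
  "mexp X = (\<Sum>k. inverse (fact k) *\<^sub>R mpow X k)"

definition lie_algebra :: "'n::finite cmat set \<Rightarrow> 'n cmat set" where
  "lie_algebra H = {X. \<forall>t::real. mexp (t *\<^sub>R X) \<in> H}"

definition complexification :: "'n::finite cmat set \<Rightarrow> 'n cmat set" where
  "complexification K0 =
     {k ** mexp (\<chi> i j. \<i> * X $ i $ j) | k X. k \<in> K0 \<and> X \<in> lie_algebra K0}"

text \<open>Topology of Z_m = G/Q: U is open iff its preimage under each orbit map
  g \<mapsto> g.z is open in G.\<close>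
definition openZ :: "nat \<Rightarrow> 'n::finite flag set \<Rightarrow> bool" where
  "openZ m U \<longleftrightarrow> U \<subseteq> Zflag m \<and>
     (\<forall>z\<in>Zflag m. openin (top_of_set SpC) {g \<in> SpC. act g z \<in> U})"

definition isotropy :: "'n::finite flag \<Rightarrow> 'n cmat set" where
  "isotropy z = {g \<in> SpC. act g z = z}"

text \<open>Base cycle: a K_0-orbit in D that is complex, i.e. coincides with the K-orbit.\<close>
definition base_cycle :: "'n::finite cmat set \<Rightarrow> 'n flag set \<Rightarrow> 'n flag set \<Rightarrow> bool" where
  "base_cycle K0 D C0 \<longleftrightarrow>
     (\<exists>z0\<in>D. C0 = orbit K0 z0 \<and> orbit (complexification K0) z0 = orbit K0 z0)"

definition generically_1_connected :: "nat \<Rightarrow> 'n::finite flag set \<Rightarrow> bool" where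
  "generically_1_connected m D \<longleftrightarrow>
     (\<exists>K0 C0 z w. max_compact_subgroup K0 \<and> base_cycle K0 D C0 \<and> z \<in> C0 \<and>
        w \<in> Zflag m \<and> openZ m (orbit (isotropy z) w) \<and>
        C0 \<inter> orbit (isotropy z) w \<noteq> {})"

end

theory Submission
  imports Defs
begin

definition bil :: "'n::finite cvec \<Rightarrow> 'n cvec \<Rightarrow> complex" where
  "bil x y = (\<Sum>i\<in>UNIV. x$i * y$i)"

definition Om :: "'n::finite cmat" where
  "Om = (\<chi> i j. (case i of Inl a \<Rightarrow> (case j of Inr b \<Rightarrow> (if a = b then 1 else 0) | Inl _ \<Rightarrow> 0)
                 | Inr a \<Rightarrow> (case j of Inl b \<Rightarrow> (if a = b then -1 else 0) | Inr _ \<Rightarrow> 0)))"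

lemma sum_UNIV_Plus: "(\<Sum>k\<in>(UNIV::('a::finite + 'b::finite) set). f k) = (\<Sum>a\<in>UNIV. f (Inl a)) + (\<Sum>b\<in>UNIV. f (Inr b))"
  by (simp add: UNIV_Plus_UNIV[symmetric] sum.Plus del: UNIV_Plus_UNIV)

lemma sum_delta_mult: "(\<Sum>b\<in>(UNIV::'b::finite set). (if a = b then c else 0) * f b) = (c::'c::comm_ring_1) * f a"
proof -
  have "(\<Sum>b\<in>(UNIV::'b set). (if a = b then c else 0) * f b) = (\<Sum>b\<in>(UNIV::'b set). if a = b then c * f b else 0)"
    by (rule sum.cong) auto
  also have "\<dots> = c * f a" by (subst sum.delta') auto
  finally show ?thesis .
qed

lemma Om_mult: "(Om *v w) $ Inl a = w $ Inr a" "(Om *v w) $ Inr a = - w $ Inl a"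
  by (simp_all add: Om_def matrix_vector_mult_def sum_UNIV_Plus sum_delta_mult)

lemma omega_bil: "omega v w = bil v (Om *v w)"
  by (simp add: omega_def bil_def sum_UNIV_Plus Om_mult sum_subtractf sum_negf algebra_simps)

lemma bil_mat: "bil (A *v x) y = bil x (transpose A *v y)"
  by (simp add: bil_def matrix_vector_mult_def transpose_def sum_distrib_left sum_distrib_right
       algebra_simps) (rule sum.swap)

lemma bil_sym: "bil x y = bil y x" by (simp add: bil_def mult.commute)

lemma bil_add1: "bil (x + y) z = bil x z + bil y z" by (simp add: bil_def algebra_simps sum.distrib)
lemma bil_add2: "bil z (x + y) = bil z x + bil z y" by (simp add: bil_def algebra_simps sum.distrib)
lemma bil_diff1: "bil (x - y) z = bil x z - bil y z" by (simp add: bil_def algebra_simps sum_subtractf)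
lemma bil_diff2: "bil z (x - y) = bil z x - bil z y" by (simp add: bil_def algebra_simps sum_subtractf)
lemma bil_smult1: "bil (c *s x) z = c * bil x z" by (simp add: bil_def algebra_simps sum_distrib_left)
lemma bil_smult2: "bil z (c *s x) = c * bil z x" by (simp add: bil_def algebra_simps sum_distrib_left)
lemma bil_zero1[simp]: "bil 0 z = 0" by (simp add: bil_def)
lemma bil_zero2[simp]: "bil z 0 = 0" by (simp add: bil_def)
lemma bil_neg1: "bil (- x) z = - bil x z" by (simp add: bil_def sum_negf)
lemma bil_neg2: "bil z (- x) = - bil z x" by (simp add: bil_def sum_negf)

lemma bil_axis: "bil (axis i 1) y = y $ i"
proof -
  have "bil (axis i 1) y = (\<Sum>b\<in>UNIV. (if i = b then 1 else 0) * y $ b)"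
    unfolding bil_def axis_def by (rule sum.cong) auto
  then show ?thesis by (simp add: sum_delta_mult)
qed

lemma mat_eq_bil:
  assumes "\<And>v w. bil v (A *v w) = bil v (B *v w)"
  shows "A = B"
proof -
  have "A *v w = B *v w" for w
  proof -
    have "(A *v w) $ i = (B *v w) $ i" for i using assms[of "axis i 1" w] by (simp add: bil_axis)
    then show ?thesis by (simp add: vec_eq_iff)
  qed
  then show ?thesis by (simp add: matrix_eq)
qed

lemma omega_mat: "omega (g *v v) (g *v w) = bil v ((transpose g ** Om ** g) *v w)"
  by (simp add: omega_bil bil_mat matrix_vector_mul_assoc matrix_mul_assoc)

lemma transpose_Om: "transpose (Om::'n::finite cmat) = - Om"
  by (auto simp: Om_def transpose_def vec_eq_iff split: sum.splits)

lemma Om_Om: "(Om::'n::finite cmat) ** Om = - mat 1"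
proof -
  have "((Om::'n cmat) ** Om) *v w = (- mat 1) *v w" for w
  proof -
    have "(Om *v (Om *v w)) $ k = - w $ k" for k
      by (cases k) (simp_all add: Om_mult)
    moreover have "(- mat 1 :: 'n cmat) *v w = - (mat 1 *v w)"
      by (simp add: matrix_vector_mult_def vec_eq_iff sum_negf)
    ultimately show ?thesis
      by (simp add: vec_eq_iff matrix_vector_mul_assoc[symmetric])
  qed
  then show ?thesis by (simp add: matrix_eq)
qed

lemma mat_mul_neg_right: "(A::'a::comm_ring_1^'n^'m) ** (- B) = - (A ** B)"
  by (simp add: matrix_matrix_mult_def vec_eq_iff sum_negf)
lemma mat_mul_neg_left: "(- A::'a::comm_ring_1^'n^'m) ** B = - (A ** B)"
  by (simp add: matrix_matrix_mult_def vec_eq_iff sum_negf)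
lemma mat_mul_diff_left: "((A::'a::comm_ring_1^'n^'m) - B) ** C = A ** C - B ** C"
  by (simp add: matrix_matrix_mult_def vec_eq_iff sum_subtractf algebra_simps)
lemma mat_mul_diff_right: "(C::'a::comm_ring_1^'n^'m) ** (A - B) = C ** A - C ** B"
  by (simp add: matrix_matrix_mult_def vec_eq_iff sum_subtractf algebra_simps)
lemma mat_mul_add_left: "((A::'a::comm_ring_1^'n^'m) + B) ** C = A ** C + B ** C"
  by (simp add: matrix_matrix_mult_def vec_eq_iff sum.distrib algebra_simps)
lemma mat_mul_add_right: "(C::'a::comm_ring_1^'n^'m) ** (A + B) = C ** A + C ** B"
  by (simp add: matrix_matrix_mult_def vec_eq_iff sum.distrib algebra_simps)
lemma mat_vec_neg: "(- A::'a::comm_ring_1^'n^'m) *v x = - (A *v x)"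
  by (simp add: matrix_vector_mult_def vec_eq_iff sum_negf)
lemma transpose_neg: "transpose (- A) = - transpose A"
  by (simp add: transpose_def vec_eq_iff)

lemma Om_orth: "(Om::'n::finite cmat) ** transpose Om = mat 1" "transpose (Om::'n::finite cmat) ** Om = mat 1"
  by (simp_all add: transpose_Om mat_mul_neg_right mat_mul_neg_left Om_Om)

definition sympl :: "'n::finite cmat \<Rightarrow> bool" where
  "sympl g \<longleftrightarrow> transpose g ** Om ** g = Om"

lemma sympl_left_inv: "sympl g \<Longrightarrow> (transpose Om ** transpose g ** Om) ** g = mat 1"
  unfolding sympl_def
  by (metis Om_orth(2) matrix_mul_assoc)

lemma sympl_invertible: "sympl g \<Longrightarrow> invertible g"
  using sympl_left_inv invertible_left_inverse by blast

lemma SpC_iff: "g \<in> SpC \<longleftrightarrow> sympl g"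
proof
  assume "g \<in> SpC"
  then have "\<forall>v w. omega (g *v v) (g *v w) = omega v w" by (simp add: SpC_def)
  then have "bil v ((transpose g ** Om ** g) *v w) = bil v (Om *v w)" for v w
    by (metis omega_mat omega_bil)
  then show "sympl g" unfolding sympl_def by (rule mat_eq_bil)
next
  assume "sympl g"
  then show "g \<in> SpC"
    unfolding SpC_def by (simp add: sympl_invertible omega_mat) (simp add: sympl_def omega_bil)
qed

lemma inv_right: "invertible A \<Longrightarrow> (A::'a::semiring_1^'n^'m) ** matrix_inv A = mat 1"
  unfolding invertible_def matrix_inv_def by (rule someI2_ex) auto
lemma inv_left: "invertible A \<Longrightarrow> matrix_inv (A::'a::semiring_1^'n^'m) ** A = mat 1"
  unfolding invertible_def matrix_inv_def by (rule someI2_ex) auto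

lemma inv_unique_left:
  fixes A B :: "'a::field^'n^'n"
  assumes "B ** A = mat 1" shows "matrix_inv A = B"
proof -
  have inv: "invertible A" using assms invertible_left_inverse by blast
  have "B = B ** (A ** matrix_inv A)" using inv_right[OF inv] by simp
  also have "\<dots> = matrix_inv A" by (simp add: matrix_mul_assoc assms)
  finally show ?thesis by simp
qed

lemma inv_unique_right:
  fixes A B :: "'a::field^'n^'n"
  assumes "A ** B = mat 1" shows "matrix_inv A = B"
  using assms inv_unique_left matrix_left_right_inverse by blast

lemma invertible_inv: "invertible (A::'a::field^'n^'n) \<Longrightarrow> invertible (matrix_inv A)"
  using inv_left invertible_def inv_right by blast

lemma inv_inv: "invertible (A::'a::field^'n^'n) \<Longrightarrow> matrix_inv (matrix_inv A) = A"
  by (simp add: inv_right inv_unique_left)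

definition realm :: "'n::finite cmat \<Rightarrow> bool" where
  "realm A \<longleftrightarrow> (\<forall>i j. A $ i $ j \<in> \<real>)"

definition cnjm :: "'n::finite cmat \<Rightarrow> 'n cmat" where
  "cnjm A = (\<chi> i j. cnj (A $ i $ j))"

lemma realm_cnjm: "realm A \<longleftrightarrow> cnjm A = A"
  by (auto simp: realm_def cnjm_def vec_eq_iff Reals_cnj_iff)

lemma cnjm_mult: "cnjm (A ** B) = cnjm A ** cnjm B"
  by (simp add: cnjm_def matrix_matrix_mult_def vec_eq_iff)

lemma cnjm_mat1[simp]: "cnjm (mat 1) = mat 1"
  by (simp add: cnjm_def mat_def vec_eq_iff)

lemma realm_mult: "realm A \<Longrightarrow> realm B \<Longrightarrow> realm (A ** B)"
  by (simp add: realm_cnjm cnjm_mult)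
lemma realm_add: "realm A \<Longrightarrow> realm B \<Longrightarrow> realm (A + B)"
  by (simp add: realm_def)
lemma realm_diff: "realm A \<Longrightarrow> realm B \<Longrightarrow> realm (A - B)"
  by (simp add: realm_def)
lemma realm_neg: "realm A \<Longrightarrow> realm (- A)"
  by (simp add: realm_def)
lemma realm_scaleR: "realm A \<Longrightarrow> realm (r *\<^sub>R A)"
  unfolding realm_def by (metis Reals_mult Reals_of_real scaleR_conv_of_real vector_scaleR_component)
lemma realm_transpose: "realm A \<Longrightarrow> realm (transpose A)"
  by (simp add: realm_def transpose_def)
lemma realm_mat1: "realm (mat 1)"
  by (simp add: realm_def mat_def)
lemma realm_Om: "realm Om"
  by (auto simp: realm_def Om_def split: sum.splits)

lemma realm_inv:
  assumes "realm A" "invertible A" shows "realm (matrix_inv A)"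
proof -
  have "cnjm (matrix_inv A) ** A = mat 1"
    using assms by (metis cnjm_mult cnjm_mat1 inv_left realm_cnjm)
  then have "matrix_inv A = cnjm (matrix_inv A)" by (rule inv_unique_left)
  then show ?thesis by (simp add: realm_cnjm)
qed

lemma SpR_iff: "g \<in> SpR \<longleftrightarrow> realm g \<and> sympl g"
  by (auto simp: SpR_def SpC_iff realm_def)

lemma sympl_mult: assumes "sympl a" "sympl b" shows "sympl (a ** b)"
proof -
  have "transpose (a ** b) ** Om ** (a ** b) = transpose b ** (transpose a ** Om ** a) ** b"
    by (simp add: matrix_transpose_mul matrix_mul_assoc)
  then show ?thesis using assms by (simp add: sympl_def)
qed

lemma sympl_inv: assumes "sympl g" shows "sympl (matrix_inv g)"
proof -
  have i: "invertible g" using assms sympl_invertible by blast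
  let ?h = "matrix_inv g"
  have "transpose ?h ** Om ** ?h = transpose ?h ** (transpose g ** Om ** g) ** ?h"
    using assms by (simp add: sympl_def)
  also have "\<dots> = transpose (g ** ?h) ** Om ** (g ** ?h)"
    by (simp add: matrix_mul_assoc matrix_transpose_mul)
  also have "\<dots> = Om" by (simp add: inv_right[OF i])
  finally show ?thesis by (simp add: sympl_def)
qed

lemma sympl_mat1: "sympl (mat 1)" by (simp add: sympl_def)

lemma sympl_transpose_eq: "sympl g \<Longrightarrow> g ** Om ** transpose g = Om"
proof -
  assume s: "sympl g"
  have i: "invertible g" using s sympl_invertible by blast
  have li: "matrix_inv g = transpose Om ** transpose g ** Om"
    using sympl_left_inv[OF s] by (rule inv_unique_left)
  have "g ** (transpose Om ** transpose g ** Om) = mat 1"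
    using inv_right[OF i] li by simp
  then have "g ** transpose Om ** transpose g ** Om ** transpose Om = transpose Om"
    by (metis matrix_mul_assoc matrix_mul_lid)
  then have "g ** transpose Om ** transpose g = transpose Om"
    by (simp add: matrix_mul_assoc[symmetric] Om_orth)
  then have "transpose (g ** transpose Om ** transpose g) = Om" by simp
  then show ?thesis by (simp add: matrix_transpose_mul matrix_mul_assoc)
qed

definition act1 :: "'n::finite cmat \<Rightarrow> 'n cmat \<Rightarrow> 'n cmat" where
  "act1 g P = transpose g ** P ** g"

definition qf :: "'n::finite cmat \<Rightarrow> 'n cvec \<Rightarrow> complex" where
  "qf P x = bil (cconj x) (P *v x)"

definition PD :: "'n::finite cmat \<Rightarrow> bool" where
  "PD P \<longleftrightarrow> (\<forall>x. x \<noteq> 0 \<longrightarrow> Re (qf P x) > 0)"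

lemma act1_comp: "act1 a (act1 b Z) = act1 (b ** a) Z"
  by (simp add: act1_def matrix_transpose_mul matrix_mul_assoc)

lemma act1_id[simp]: "act1 (mat 1) Z = Z" by (simp add: act1_def)

lemma act1_diff: "act1 g (P - Q) = act1 g P - act1 g Q"
  by (simp add: act1_def mat_mul_diff_left mat_mul_diff_right)
lemma act1_add: "act1 g (P + Q) = act1 g P + act1 g Q"
  by (simp add: act1_def mat_mul_add_left mat_mul_add_right)
lemma act1_scaleR: "act1 g (r *\<^sub>R P) = r *\<^sub>R act1 g P"
  by (simp add: act1_def matrix_scalar_ac scalar_matrix_assoc)

lemma linear_act1: "linear (act1 g)"
  by (rule linearI) (simp_all add: act1_add act1_scaleR)

lemma entry_le_norm: "norm (A $ i $ j) \<le> norm (A::'a::real_normed_vector^'n::finite^'m::finite)"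
proof -
  have "norm (A $ i $ j) \<le> norm (A $ i)" by (rule Finite_Cartesian_Product.norm_nth_le)
  also have "\<dots> \<le> norm A" by (rule Finite_Cartesian_Product.norm_nth_le)
  finally show ?thesis .
qed

lemma norm_vec_le_sum: "norm (x::'a::real_normed_vector^'n) \<le> (\<Sum>i\<in>UNIV. norm (x $ i))"
  unfolding norm_vec_def by (rule L2_set_le_sum) auto

lemma norm_le_entries: "norm (A::'a::real_normed_vector^'n^'m) \<le> (\<Sum>i\<in>UNIV. \<Sum>j\<in>UNIV. norm (A $ i $ j))"
  by (rule order_trans[OF norm_vec_le_sum]) (intro sum_mono norm_vec_le_sum)

lemma norm_entries_bound:
  assumes "\<And>i j. norm ((A::'a::real_normed_vector^'n^'m) $ i $ j) \<le> c"
  shows "norm A \<le> real CARD('m) * real CARD('n) * c"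
proof -
  have "norm A \<le> (\<Sum>i\<in>(UNIV::'m set). \<Sum>j\<in>(UNIV::'n set). c)"
    by (rule order_trans[OF norm_le_entries]) (intro sum_mono assms)
  then show ?thesis by simp
qed

lemma norm_mmul_le:
  fixes A :: "complex^'k^'m" and B :: "complex^'n^'k"
  shows "norm (A ** B) \<le> real CARD('m) * real CARD('n) * (real CARD('k) * (norm A * norm B))"
proof (rule norm_entries_bound)
  fix i j
  have "norm ((A ** B) $ i $ j) = norm (\<Sum>k\<in>UNIV. A $ i $ k * B $ k $ j)"
    by (simp add: matrix_matrix_mult_def)
  also have "\<dots> \<le> (\<Sum>k\<in>(UNIV::'k set). norm (A $ i $ k * B $ k $ j))" by (rule norm_sum)
  also have "\<dots> \<le> (\<Sum>k\<in>(UNIV::'k set). norm A * norm B)"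
    by (intro sum_mono) (simp add: norm_mult mult_mono entry_le_norm)
  finally show "norm ((A ** B) $ i $ j) \<le> real CARD('k) * (norm A * norm B)" by simp
qed

lemma norm_transpose_le: "norm (transpose (A::complex^'n^'m)) \<le> real CARD('n) * real CARD('m) * norm A"
  by (rule norm_entries_bound) (simp add: transpose_def entry_le_norm)

lemma cont_mmul[continuous_intros]:
  fixes f :: "'x::topological_space \<Rightarrow> complex^'k^'m" and g :: "'x \<Rightarrow> complex^'n^'k"
  assumes "continuous_on S f" "continuous_on S g"
  shows "continuous_on S (\<lambda>x. f x ** g x)"
  unfolding matrix_matrix_mult_def
  by (intro continuous_intros assms)

lemma cont_transpose[continuous_intros]:
  fixes f :: "'x::topological_space \<Rightarrow> complex^'n^'m"
  assumes "continuous_on S f"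
  shows "continuous_on S (\<lambda>x. transpose (f x))"
  unfolding transpose_def by (intro continuous_intros assms)

lemma cconj_mult: "cconj (A *v x) = cnjm A *v cconj x"
  by (simp add: cconj_def cnjm_def matrix_vector_mult_def vec_eq_iff)

lemma cconj_real_mult: "realm A \<Longrightarrow> cconj (A *v x) = A *v cconj x"
  by (simp add: cconj_mult realm_cnjm)

lemma Re_cnj_mult_self: "Re (cnj z * z) = (cmod z)^2"
  using cmod_power2[of z] by (simp add: power2_eq_square)

lemma bil_cconj_self: "Re (bil (cconj y) y) = (norm y)^2"
proof -
  have "Re (bil (cconj y) y) = (\<Sum>i\<in>UNIV. (cmod (y$i))^2)"
    unfolding bil_def cconj_def Re_sum vec_lambda_beta by (simp only: Re_cnj_mult_self)
  also have "\<dots> = (norm y)^2"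
    by (simp add: norm_vec_def L2_set_def sum_nonneg)
  finally show ?thesis .
qed

lemma qf_add: "qf (A + B) x = qf A x + qf B x"
  by (simp add: qf_def matrix_vector_mult_add_rdistrib bil_add2)

lemma mat_vec_scaleR: "(r *\<^sub>R (A::complex^'n^'m)) *v x = r *\<^sub>R (A *v x)"
  by (simp add: matrix_vector_mult_def vec_eq_iff scaleR_sum_right)

lemma bil_scaleR2: "bil z (r *\<^sub>R x) = of_real r * bil z x"
proof -
  have "\<And>i. (r *\<^sub>R x)$i = of_real r * x$i" by (metis vector_scaleR_component scaleR_conv_of_real)
  then show ?thesis by (simp add: bil_def sum_distrib_left algebra_simps)
qed

lemma qf_scaleR: "qf (r *\<^sub>R A) x = of_real r * qf A x"
  by (simp add: qf_def mat_vec_scaleR bil_scaleR2)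

lemma qf_transpose_mult_real:
  assumes "realm k" shows "Re (qf (transpose k ** k) x) = (norm (k *v x))^2"
proof -
  have "qf (transpose k ** k) x = bil (cconj x) (transpose k *v (k *v x))"
    by (simp add: qf_def matrix_vector_mul_assoc)
  also have "\<dots> = bil (k *v cconj x) (k *v x)" by (simp add: bil_mat)
  also have "\<dots> = bil (cconj (k *v x)) (k *v x)" using assms by (simp add: cconj_real_mult)
  finally show ?thesis by (simp add: bil_cconj_self)
qed

lemma transpose_add: "transpose (A + B) = transpose A + transpose B"
  by (simp add: transpose_def vec_eq_iff)

lemma convex_good: "convex {P::'n::finite cmat. realm P \<and> transpose P = P \<and> PD P}"
  unfolding convex_def
proof (intro ballI allI impI, clarsimp)
  fix P Q :: "'n cmat" and u v :: real
  assume a: "realm P" "transpose P = P" "PD P" "realm Q" "transpose Q = Q" "PD Q" "0 \<le> u" "0 \<le> v" "u + v = 1"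
  show "realm (u *\<^sub>R P + v *\<^sub>R Q) \<and> transpose (u *\<^sub>R P + v *\<^sub>R Q) = u *\<^sub>R P + v *\<^sub>R Q \<and>
        PD (u *\<^sub>R P + v *\<^sub>R Q)"
  proof (intro conjI)
    show "realm (u *\<^sub>R P + v *\<^sub>R Q)" using a by (simp add: realm_add realm_scaleR)
    show "transpose (u *\<^sub>R P + v *\<^sub>R Q) = u *\<^sub>R P + v *\<^sub>R Q"
      using a by (simp add: transpose_add transpose_scalar)
    show "PD (u *\<^sub>R P + v *\<^sub>R Q)"
      unfolding PD_def
    proof (intro allI impI)
      fix x :: "'n cvec" assume x: "x \<noteq> 0"
      have p: "Re (qf P x) > 0" "Re (qf Q x) > 0" using a x by (auto simp: PD_def)
      have "Re (qf (u *\<^sub>R P + v *\<^sub>R Q) x) = u * Re (qf P x) + v * Re (qf Q x)"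
        by (simp add: qf_add qf_scaleR)
      moreover have "u * Re (qf P x) + v * Re (qf Q x) > 0"
      proof (cases "u = 0")
        case True then show ?thesis using a p by simp
      next
        case False then have "u > 0" using a by simp
        then show ?thesis using p a by (simp add: add_pos_nonneg)
      qed
      ultimately show "Re (qf (u *\<^sub>R P + v *\<^sub>R Q) x) > 0" by simp
    qed
  qed
qed

lemma act1_bound:
  fixes k :: "'n::finite cmat"
  assumes "norm k \<le> R"
  shows "norm (act1 k Z) \<le> (real CARD('n+'n))^8 * R^2 * norm Z"
proof -
  let ?c = "real CARD('n+'n)"
  have c0: "?c \<ge> 0" by simp
  have R0: "R \<ge> 0" using assms norm_ge_zero order_trans by blast
  have t: "norm (transpose k) \<le> ?c * ?c * R"
    using norm_transpose_le[of k] assms by (meson c0 mult_left_mono order_trans mult_nonneg_nonneg)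
  have "norm (transpose k ** Z) \<le> ?c * ?c * (?c * (norm (transpose k) * norm Z))"
    by (rule norm_mmul_le)
  also have "\<dots> \<le> ?c * ?c * (?c * ((?c * ?c * R) * norm Z))"
    by (intro mult_left_mono mult_right_mono t) auto
  finally have a: "norm (transpose k ** Z) \<le> ?c^5 * R * norm Z" by (simp add: power_def algebra_simps)
  have "norm (transpose k ** Z ** k) \<le> ?c * ?c * (?c * (norm (transpose k ** Z) * norm k))"
    by (rule norm_mmul_le)
  also have "\<dots> \<le> ?c * ?c * (?c * ((?c^5 * R * norm Z) * R))"
    by (intro mult_left_mono mult_mono a assms) (auto simp: R0)
  finally show ?thesis by (simp add: act1_def power_def algebra_simps)
qed

lemma half_sum_norm:
  fixes a b :: "'a::real_inner"
  shows "(norm ((1/2) *\<^sub>R (a + b)))^2 = ((norm a)^2 + (norm b)^2)/2 - (norm (a - b))^2 / 4"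
  unfolding power2_norm_eq_inner
  by (simp add: inner_add_left inner_add_right inner_diff_left
      inner_diff_right inner_commute) (simp add: field_simps inner_commute)

lemma stage1:
  fixes K :: "'n::finite cmat set"
  assumes cK: "compact K" and gK: "matgroup K" and sK: "K \<subseteq> SpR"
  shows "\<exists>P. realm P \<and> transpose P = P \<and> PD P \<and> (\<forall>g\<in>K. act1 g P = P)"
proof -
  have K1: "mat 1 \<in> K" and Kmul: "\<And>x y. x\<in>K \<Longrightarrow> y\<in>K \<Longrightarrow> x ** y \<in> K"
    and Kinv: "\<And>x. x \<in> K \<Longrightarrow> invertible x \<and> matrix_inv x \<in> K"
    using gK by (auto simp: matgroup_def)
  have Kreal: "\<And>k. k\<in>K \<Longrightarrow> realm k" using sK by (auto simp: SpR_iff)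
  obtain R where R: "\<And>k. k \<in> K \<Longrightarrow> norm k \<le> R"
    using compact_imp_bounded[OF cK] unfolding bounded_iff by blast
  define B where "B = (real CARD('n+'n))^8 * R^2 + 1"
  have B0: "B > 0" unfolding B_def by (simp add: add_nonneg_pos)
  have bound: "norm (act1 k Z) \<le> B * norm Z" if "k \<in> K" for k Z
  proof -
    have "norm (act1 k Z) \<le> (real CARD('n+'n))^8 * R^2 * norm Z" using act1_bound R that by blast
    also have "\<dots> \<le> B * norm Z" unfolding B_def by (simp add: distrib_right)
    finally show ?thesis .
  qed
  define N where "N P = (SUP k\<in>K. norm (act1 k P))" for P
  have bdd: "bdd_above ((\<lambda>k. norm (act1 k P)) ` K)" for P
    using bound by (intro bdd_aboveI2) blast
  have Nup: "norm (act1 k P) \<le> N P" if "k \<in> K" for k P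
    unfolding N_def using bdd that by (rule cSUP_upper2) simp
  have Nleast: "N P \<le> M" if "\<And>k. k \<in> K \<Longrightarrow> norm (act1 k P) \<le> M" for P M
    unfolding N_def using K1 that by (intro cSUP_least) auto
  have Nlip: "N P \<le> N Q + B * norm (P - Q)" for P Q
  proof (rule Nleast)
    fix k assume k: "k \<in> K"
    have "norm (act1 k P) \<le> norm (act1 k Q) + norm (act1 k (P - Q))"
      by (metis act1_diff add.commute diff_add_cancel norm_triangle_ineq)
    also have "\<dots> \<le> N Q + B * norm (P - Q)" by (intro add_mono Nup bound k)
    finally show "norm (act1 k P) \<le> N Q + B * norm (P - Q)" .
  qed
  have Ncont: "continuous_on UNIV N"
    unfolding continuous_on_iff
  proof (intro ballI allI impI)
    fix x :: "'n cmat" and e :: real assume e: "e > 0"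
    show "\<exists>d>0. \<forall>x'\<in>UNIV. dist x' x < d \<longrightarrow> dist (N x') (N x) < e"
    proof (intro exI[of _ "e / B"] conjI ballI impI)
      show "e / B > 0" using e B0 by simp
      fix y assume "dist y x < e / B"
      then have d: "B * norm (y - x) < e" using B0 by (simp add: dist_norm field_simps)
      have "N y \<le> N x + B * norm (y - x)" by (rule Nlip)
      moreover have "N x \<le> N y + B * norm (x - y)" by (rule Nlip)
      ultimately show "dist (N y) (N x) < e" using d by (simp add: dist_real_def norm_minus_commute)
    qed
  qed
  define S0 where "S0 = (\<lambda>k. act1 k (mat 1)) ` K"
  define C where "C = convex hull S0"
  have cC: "compact C" unfolding C_def S0_def
    by (intro compact_convex_hull compact_continuous_image cK)
       (unfold act1_def, intro continuous_intros)
  have C1: "mat 1 \<in> C" unfolding C_def S0_def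
    by (rule hull_inc) (metis K1 act1_id image_eqI)
  obtain P where PC: "P \<in> C" and Pmin: "\<And>Q. Q \<in> C \<Longrightarrow> N P \<le> N Q"
    using continuous_attains_inf[OF cC _ continuous_on_subset[OF Ncont]] C1 by blast
  have good: "C \<subseteq> {P. realm P \<and> transpose P = P \<and> PD P}"
    unfolding C_def
  proof (rule hull_minimal)
    show "convex {P::'n cmat. realm P \<and> transpose P = P \<and> PD P}" by (rule convex_good)
    show "S0 \<subseteq> {P. realm P \<and> transpose P = P \<and> PD P}"
    proof
      fix X assume "X \<in> S0"
      then obtain k where k: "k \<in> K" and X: "X = transpose k ** k"
        unfolding S0_def act1_def by auto
      have r: "realm k" using Kreal k by blast
      have inv: "invertible k" using Kinv k by blast
      have "PD X" unfolding PD_def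
      proof (intro allI impI)
        fix x :: "'n cvec" assume "x \<noteq> 0"
        then have "k *v x \<noteq> 0"
          using inj_matrix_vector_mult[OF inv] by (metis injD matrix_vector_mult_0_right)
        then show "Re (qf X x) > 0" using qf_transpose_mult_real[OF r] X by simp
      qed
      then show "X \<in> {P. realm P \<and> transpose P = P \<and> PD P}"
        using r X by (simp add: realm_mult realm_transpose matrix_transpose_mul)
    qed
  qed
  have Cinv: "act1 g Q \<in> C" if g: "g \<in> K" and Q: "Q \<in> C" for g Q
  proof -
    have "act1 g ` C = convex hull (act1 g ` S0)"
      unfolding C_def by (rule convex_hull_linear_image[OF linear_act1])
    also have "\<dots> \<subseteq> C" unfolding C_def
    proof (rule hull_mono)
      show "act1 g ` S0 \<subseteq> S0" unfolding S0_def
        by (auto simp: act1_comp intro!: image_eqI Kmul g)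
    qed
    finally show ?thesis using Q by blast
  qed
  have Ninv: "N (act1 g Q) = N Q" if g: "g \<in> K" for g Q
  proof -
    have im: "(\<lambda>k. g ** k) ` K = K"
    proof
      show "(\<lambda>k. g ** k) ` K \<subseteq> K" using Kmul g by auto
      show "K \<subseteq> (\<lambda>k. g ** k) ` K"
      proof
        fix k assume k: "k \<in> K"
        have "g ** (matrix_inv g ** k) = k"
          using inv_right Kinv g by (metis matrix_mul_assoc matrix_mul_lid)
        moreover have "matrix_inv g ** k \<in> K" using Kinv Kmul g k by blast
        ultimately show "k \<in> (\<lambda>k. g ** k) ` K" by (metis image_eqI)
      qed
    qed
    have "N (act1 g Q) = (SUP k\<in>K. norm (act1 (g ** k) Q))"
      unfolding N_def by (simp add: act1_comp)
    also have "\<dots> = (SUP k\<in>(\<lambda>k. g ** k) ` K. norm (act1 k Q))"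
      by (simp add: image_image)
    also have "\<dots> = N Q" unfolding N_def im ..
    finally show ?thesis .
  qed
  have Pfix: "act1 g P = P" if g: "g \<in> K" for g
  proof (rule ccontr)
    assume ne: "act1 g P \<noteq> P"
    define y where "y = act1 g P"
    define M where "M = (1/2) *\<^sub>R (P + y)"
    have yC: "y \<in> C" unfolding y_def using Cinv g PC by blast
    have MC: "M \<in> C"
    proof -
      have "convex C" unfolding C_def by simp
      then have "(1/2) *\<^sub>R P + (1/2) *\<^sub>R y \<in> C" using PC yC
        by (rule convexD) auto
      then show ?thesis unfolding M_def by (simp add: scaleR_add_right)
    qed
    have Ny: "N y = N P" unfolding y_def using Ninv g by blast
    define n where "n = N P"
    have n0: "n \<ge> 0" unfolding n_def using Nup[OF K1, of P] norm_ge_zero order_trans by blast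
    define \<delta> where "\<delta> = (norm (P - y) / B)^2 / 4"
    have d0: "\<delta> > 0" unfolding \<delta>_def using ne B0 by (simp add: y_def)
    have kM: "(norm (act1 k M))^2 \<le> n^2 - \<delta>" if k: "k \<in> K" for k
    proof -
      have eq: "act1 k M = (1/2) *\<^sub>R (act1 k P + act1 k y)"
        unfolding M_def by (simp add: act1_scaleR act1_add)
      have lb: "norm (P - y) / B \<le> norm (act1 k P - act1 k y)"
      proof -
        have ki: "matrix_inv k \<in> K" "invertible k" using Kinv k by auto
        have "P - y = act1 (matrix_inv k) (act1 k (P - y))"
          by (simp add: act1_comp inv_right[OF ki(2)])
        then have "norm (P - y) \<le> B * norm (act1 k (P - y))"
          using bound[OF ki(1)] by metis
        then show ?thesis using B0 by (simp add: act1_diff field_simps)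
      qed
      have a: "norm (act1 k P) \<le> n" unfolding n_def using Nup k by blast
      have b: "norm (act1 k y) \<le> n" unfolding n_def using Nup k Ny by metis
      have "(norm (act1 k M))^2 = ((norm (act1 k P))^2 + (norm (act1 k y))^2)/2 - (norm (act1 k P - act1 k y))^2/4"
        unfolding eq by (rule half_sum_norm)
      also have "\<dots> \<le> (n^2 + n^2)/2 - (norm (P - y) / B)^2/4"
        using a b lb by (intro diff_mono divide_right_mono add_mono power_mono) (auto simp: B0 less_imp_le)
      finally show ?thesis unfolding \<delta>_def by simp
    qed
    have "n^2 - \<delta> \<ge> 0" using kM[OF K1] by (meson order_trans zero_le_power2)
    have "N M \<le> sqrt (n^2 - \<delta>)"
      by (rule Nleast) (metis kM real_le_rsqrt)
    also have "\<dots> < sqrt (n^2)" using d0 by (intro real_sqrt_less_mono) simp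
    also have "\<dots> = n" using n0 by simp
    finally have "N M < N P" unfolding n_def .
    then show False using Pmin[OF MC] by simp
  qed
  show ?thesis using good PC Pfix by blast
qed

definition madj :: "'n::finite cmat \<Rightarrow> 'n cmat" where
  "madj A = transpose (cnjm A)"

definition gY :: "'n::finite cmat \<Rightarrow> 'n cmat \<Rightarrow> real" where
  "gY P Y = 2 * Re (trace Y) - Re (trace (madj Y ** P ** Y))"

lemma PD_invertible: assumes "PD P" shows "invertible P"
proof -
  have "\<forall>x. P *v x = 0 \<longrightarrow> x = 0"
  proof (intro allI impI)
    fix x assume "P *v x = 0"
    then have "qf P x = 0" by (simp add: qf_def)
    then show "x = 0" using assms unfolding PD_def by force
  qed
  then show ?thesis using matrix_left_invertible_ker invertible_left_inverse by blast
qed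

lemma madj_mult: "madj (A ** B) = madj B ** madj A"
  by (simp add: madj_def cnjm_mult matrix_transpose_mul)
lemma madj_diff: "madj (A - B) = madj A - madj B"
  by (simp add: madj_def cnjm_def transpose_def vec_eq_iff)
lemma madj_real_sym: "realm P \<Longrightarrow> transpose P = P \<Longrightarrow> madj P = P"
  by (simp add: madj_def realm_cnjm)
lemma trace_madj: "trace (madj Y) = cnj (trace Y)"
  by (simp add: madj_def trace_def cnjm_def transpose_def)

lemma trace_madj_qf: "trace (madj Z ** P ** Z) = (\<Sum>j\<in>UNIV. qf P (\<chi> i. Z $ i $ j))"
  unfolding trace_def qf_def bil_def madj_def cnjm_def transpose_def cconj_def
  by (simp add: matrix_matrix_mult_def matrix_vector_mult_def sum_distrib_left sum_distrib_right mult.assoc)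
     (rule sum.cong[OF refl], rule sum.swap)

lemma trace_madj_PD:
  assumes "PD P"
  shows "Re (trace (madj Z ** P ** Z)) \<ge> 0" "Re (trace (madj Z ** P ** Z)) = 0 \<Longrightarrow> Z = 0"
proof -
  have col: "Re (qf P (\<chi> i. Z $ i $ j)) \<ge> 0" for j
    using assms unfolding PD_def by (cases "(\<chi> i. Z $ i $ j) = 0") (auto simp: qf_def less_imp_le)
  show "Re (trace (madj Z ** P ** Z)) \<ge> 0"
    by (simp add: trace_madj_qf Re_sum sum_nonneg col)
  assume "Re (trace (madj Z ** P ** Z)) = 0"
  then have "(\<Sum>j\<in>UNIV. Re (qf P (\<chi> i. Z $ i $ j))) = 0" by (simp add: trace_madj_qf Re_sum)
  then have "\<forall>j\<in>UNIV. Re (qf P (\<chi> i. Z $ i $ j)) = 0"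
    by (subst sum_nonneg_eq_0_iff[symmetric]) (auto simp: col)
  then have "(\<chi> i. Z $ i $ j) = 0" for j using assms unfolding PD_def by force
  then show "Z = 0" by (simp add: vec_eq_iff)
qed

lemma herm_inv:
  assumes "madj P = P" "invertible P"
  shows "madj (matrix_inv P) = matrix_inv P"
proof -
  have "madj (matrix_inv P) ** P = mat 1"
    by (metis assms inv_right madj_mult madj_def cnjm_mat1 transpose_mat)
  then show ?thesis by (metis inv_unique_left)
qed

lemma gY_formula:
  assumes h: "madj P = P" and pd: "PD P"
  shows "Re (trace (matrix_inv P)) - gY P Y = Re (trace (madj (Y - matrix_inv P) ** P ** (Y - matrix_inv P)))"
proof -
  have i: "invertible P" using pd PD_invertible by blast
  let ?Q = "matrix_inv P"
  have hq: "madj ?Q = ?Q" using herm_inv[OF h i] .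
  have "madj (Y - ?Q) ** P ** (Y - ?Q) = madj Y ** P ** Y - madj Y ** (P ** ?Q) - (?Q ** P) ** Y + (?Q ** P) ** ?Q"
    by (simp add: madj_diff hq mat_mul_diff_left mat_mul_diff_right matrix_mul_assoc algebra_simps)
  also have "\<dots> = madj Y ** P ** Y - madj Y - Y + ?Q"
    by (simp add: inv_right[OF i] inv_left[OF i])
  finally have e: "madj (Y - ?Q) ** P ** (Y - ?Q) = madj Y ** P ** Y - madj Y - Y + ?Q" .
  show ?thesis
    unfolding e gY_def by (simp add: trace_add trace_sub trace_madj)
qed

lemma gY_le:
  assumes "madj P = P" "PD P" shows "gY P Y \<le> Re (trace (matrix_inv P))"
  using gY_formula[OF assms, of Y] trace_madj_PD(1)[OF assms(2), of "Y - matrix_inv P"] by linarith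

lemma gY_eq:
  assumes "madj P = P" "PD P" shows "gY P (matrix_inv P) = Re (trace (matrix_inv P))"
  using gY_formula[OF assms, of "matrix_inv P"] by (simp add: madj_def cnjm_def transpose_def trace_def)

lemma gY_eq_imp:
  assumes "madj P = P" "PD P" "gY P Y = Re (trace (matrix_inv P))" shows "Y = matrix_inv P"
  using gY_formula[OF assms(1,2), of Y] trace_madj_PD(2)[OF assms(2), of "Y - matrix_inv P"] assms(3)
  by simp

lemma trace_scaleR: "trace (r *\<^sub>R A) = of_real r * trace (A::'n::finite cmat)"
proof -
  have "\<And>i. (r *\<^sub>R A)$i$i = of_real r * A$i$i" by (metis vector_scaleR_component scaleR_conv_of_real)
  then show ?thesis by (simp add: trace_def sum_distrib_left)
qed

lemma gY_mid: "gY ((1/2) *\<^sub>R (A + B)) Y = (gY A Y + gY B Y) / 2"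
proof -
  have sc: "madj Y ** (c *\<^sub>R X) ** Y = c *\<^sub>R (madj Y ** X ** Y)" for c X
    by (metis matrix_scalar_ac scalar_matrix_assoc)
  have "madj Y ** ((1/2) *\<^sub>R (A + B)) ** Y = (1/2) *\<^sub>R (madj Y ** A ** Y + madj Y ** B ** Y)"
    by (simp only: sc mat_mul_add_left mat_mul_add_right)
  then show ?thesis by (simp add: gY_def trace_scaleR trace_add field_simps scaleR_add_right)
qed

lemma strict_conv_trinv:
  assumes hA: "madj A = A" "PD A" and hB: "madj B = B" "PD B"
    and Mdef: "M = (1/2) *\<^sub>R (A + B)"
    and hM: "madj M = M" "PD M"
    and ne: "A \<noteq> B"
  shows "Re (trace (matrix_inv M)) < (Re (trace (matrix_inv A)) + Re (trace (matrix_inv B))) / 2"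
proof -
  define Y where "Y = matrix_inv M"
  define ta where "ta = Re (trace (matrix_inv A))"
  define tb where "tb = Re (trace (matrix_inv B))"
  define ga where "ga = gY A Y"
  define gb where "gb = gY B Y"
  have e: "Re (trace Y) = (ga + gb) / 2" unfolding ga_def gb_def Y_def
    using gY_eq[OF hM] gY_mid Mdef by metis
  have a: "ga \<le> ta" unfolding ga_def ta_def using gY_le[OF hA] .
  have b: "gb \<le> tb" unfolding gb_def tb_def using gY_le[OF hB] .
  have nn: "\<not> (ga = ta \<and> gb = tb)"
  proof
    assume "ga = ta \<and> gb = tb"
    then have "Y = matrix_inv A" "Y = matrix_inv B" unfolding ga_def ta_def gb_def tb_def
      using gY_eq_imp hA hB by blast+
    then have "matrix_inv A = matrix_inv B" by simp
    then have "A = B" using hA hB PD_invertible inv_inv by metis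
    then show False using ne by simp
  qed
  have "ga < ta \<or> gb < tb" using a b nn by (auto simp: less_le)
  then have "Re (trace Y) < (ta + tb) / 2" using e a b by auto
  then show ?thesis unfolding Y_def ta_def tb_def .
qed

definition outer :: "'n::finite cvec \<Rightarrow> 'n cmat" where
  "outer x = (\<chi> i j. x $ i * cnj (x $ j))"

lemma trace_outer: "trace (outer x) = of_real ((norm x)^2)"
proof -
  have "trace (outer x) = (\<Sum>i\<in>UNIV. of_real ((cmod (x$i))^2))"
    unfolding trace_def outer_def by (simp only: vec_lambda_beta complex_norm_square[symmetric] norm_complex_def)
  also have "\<dots> = of_real (\<Sum>i\<in>UNIV. (cmod (x$i))^2)" by (simp only: of_real_sum)
  also have "(\<Sum>i\<in>UNIV. (cmod (x$i))^2) = (norm x)^2"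
    by (simp add: norm_vec_def L2_set_def sum_nonneg)
  finally show ?thesis .
qed

lemma madj_scaleR: "madj (t *\<^sub>R A) = t *\<^sub>R madj A"
proof -
  have c: "\<And>B i j. (t *\<^sub>R B)$i$j = of_real t * (B::'n::finite cmat)$i$j"
    by (metis vector_scaleR_component scaleR_conv_of_real)
  show ?thesis by (simp add: madj_def cnjm_def transpose_def vec_eq_iff c)
qed

lemma madj_outer: "madj (t *\<^sub>R outer x) = t *\<^sub>R outer x"
  by (simp add: madj_scaleR) (simp add: madj_def cnjm_def outer_def transpose_def vec_eq_iff)

lemma outer_P_outer: "(outer x ** P ** outer x) $ i $ j = qf P x * outer x $ i $ j"
  unfolding outer_def qf_def bil_def cconj_def
  by (simp add: matrix_matrix_mult_def matrix_vector_mult_def sum_distrib_left sum_distrib_right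
      algebra_simps) (rule sum.swap)

lemma trace_outer_P_outer: "trace (outer x ** P ** outer x) = qf P x * trace (outer x)"
  unfolding trace_def by (simp add: outer_P_outer sum_distrib_left)

lemma gY_outer: "gY P (t *\<^sub>R outer x) = 2 * t * (norm x)^2 - t^2 * (norm x)^2 * Re (qf P x)"
proof -
  have "madj (t *\<^sub>R outer x) ** P ** (t *\<^sub>R outer x) = t *\<^sub>R (t *\<^sub>R (outer x ** P ** outer x))"
    by (simp add: madj_outer matrix_scalar_ac scalar_matrix_assoc)
  then show ?thesis
    by (simp add: gY_def trace_scaleR trace_outer_P_outer trace_outer power2_eq_square algebra_simps)
qed

lemma Ybound:
  fixes P :: "'n::finite cmat"
  assumes Y: "\<forall>Y. gY P Y \<le> c"
  shows "(norm x)^2 \<le> c * Re (qf P x)"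
proof (cases "x = 0")
  case True then show ?thesis by (simp add: qf_def)
next
  case False
  define n where "n = (norm x)^2"
  define q where "q = Re (qf P x)"
  have n0: "n > 0" unfolding n_def using False by simp
  have g: "2 * t * n - t^2 * n * q \<le> c" for t
    using Y gY_outer[of P t x] unfolding n_def q_def by metis
  have q0: "q > 0"
  proof (rule ccontr)
    assume "\<not> q > 0"
    then have "q \<le> 0" by simp
    define t where "t = (\<bar>c\<bar> + 1) / n"
    have "t^2 * n * q \<le> 0" using \<open>q \<le> 0\<close> n0 by (simp add: mult_nonneg_nonpos)
    moreover have "2 * t * n = 2 * (\<bar>c\<bar> + 1)" unfolding t_def using n0 by simp
    ultimately have "2 * t * n - t^2 * n * q > c" by (smt (verit))
    then show False using g[of t] by simp
  qed
  have "2 * (1/q) * n - (1/q)^2 * n * q = n / q" using q0 by (simp add: power2_eq_square field_simps)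
  then have "n / q \<le> c" using g[of "1/q"] by simp
  then show ?thesis using q0 unfolding n_def q_def by (simp add: field_simps)
qed

lemma Ypos:
  fixes P :: "'n::finite cmat"
  assumes Y: "\<forall>Y. gY P Y \<le> c" shows "PD P"
  unfolding PD_def
proof (intro allI impI)
  fix x :: "'n cvec" assume x: "x \<noteq> 0"
  have "0 < (norm x)^2" using x by simp
  also have "\<dots> \<le> c * Re (qf P x)" by (rule Ybound[OF Y])
  finally have "0 < c * Re (qf P x)" .
  moreover have "c \<ge> 0" using Y[rule_format, of 0] by (simp add: gY_def trace_def)
  ultimately show "Re (qf P x) > 0" by (simp add: zero_less_mult_iff)
qed

lemma inv_entry_bound:
  fixes P :: "'n::finite cmat"
  assumes i: "invertible P" and b: "\<And>y. (norm y)^2 \<le> c * Re (qf P y)" and c0: "c \<ge> 0"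
  shows "cmod (matrix_inv P $ i $ j) \<le> c"
proof -
  define y where "y = matrix_inv P *v axis j 1"
  have Py: "P *v y = axis j 1" unfolding y_def by (simp add: matrix_vector_mul_assoc inv_right[OF i])
  have yi: "y $ i = matrix_inv P $ i $ j"
    unfolding y_def by (simp add: matrix_vector_mult_def axis_def mult_delta_right[symmetric] if_distrib cong: if_cong)
  have "Re (qf P y) = Re (cnj (y $ j))"
    unfolding qf_def Py by (simp add: bil_sym[of _ "axis j 1"] bil_axis cconj_def)
  also have "\<dots> \<le> cmod (y $ j)" by (simp add: complex_Re_le_cmod)
  also have "\<dots> \<le> norm y" by (rule Finite_Cartesian_Product.norm_nth_le)
  finally have "(norm y)^2 \<le> c * norm y" using b[of y] c0 by (meson mult_left_mono order_trans)
  then have "norm y \<le> c" by (cases "norm y = 0") (auto simp: power2_eq_square c0)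
  then show ?thesis using Finite_Cartesian_Product.norm_nth_le[of y i] yi by simp
qed

lemma inv_norm_bound:
  fixes P :: "'n::finite cmat"
  assumes i: "invertible P" and b: "\<And>y. (norm y)^2 \<le> c * Re (qf P y)" and c0: "c \<ge> 0"
  shows "norm (matrix_inv P) \<le> real CARD('n::finite + 'n) * real CARD('n + 'n) * c"
  by (rule norm_entries_bound) (rule inv_entry_bound[OF i b c0])

lemma inv_diff:
  assumes "invertible P" "invertible Q"
  shows "matrix_inv P - matrix_inv Q = matrix_inv P ** (Q - P) ** matrix_inv (Q::'n::finite cmat)"
  by (simp add: mat_mul_diff_left mat_mul_diff_right matrix_mul_assoc[symmetric] inv_right inv_left assms)

lemma realm_Im: "realm P \<longleftrightarrow> (\<forall>i j. Im (P $ i $ j) = 0)"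
  by (simp add: realm_def complex_is_Real_iff)

lemma mv_axis: "((P::'n::finite cmat) *v axis b 1) $ a = P $ a $ b"
proof -
  have "(P *v axis b 1) $ a = (\<Sum>k\<in>UNIV. (if b = k then 1 else 0) * P $ a $ k)"
    unfolding matrix_vector_mult_def axis_def by (simp add: mult.commute) (rule sum.cong, auto)
  then show ?thesis using sum_delta_mult[of b 1 "\<lambda>k. P $ a $ k"] by simp
qed

lemma cconj_axis: "cconj (axis i 1) = axis i 1"
  by (simp add: cconj_def axis_def vec_eq_iff)

lemma bil_axis_P: "bil (axis a 1) ((P::'n::finite cmat) *v axis b 1) = P $ a $ b"
  by (simp add: bil_axis mv_axis)

lemma qf_axis: "qf P (axis i 1) = P $ i $ i"
  by (simp add: qf_def cconj_axis bil_axis_P)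

lemma cconj_add: "cconj (x + y) = cconj x + cconj y" by (simp add: cconj_def vec_eq_iff)
lemma cconj_diff: "cconj (x - y) = cconj x - cconj y" by (simp add: cconj_def vec_eq_iff)

lemma qf_axis_plus: "qf P (axis i 1 + axis j 1) = P$i$i + P$i$j + P$j$i + P$j$j"
  by (simp add: qf_def cconj_add cconj_axis matrix_vector_right_distrib bil_add1 bil_add2 bil_axis_P)

lemma qf_axis_minus: "qf P (axis i 1 - axis j 1) = P$i$i - P$i$j - P$j$i + P$j$j"
  by (simp add: qf_def cconj_diff cconj_axis matrix_vector_mult_diff_distrib bil_diff1 bil_diff2 bil_axis_P)

lemma entry_bound_PSD:
  fixes P :: "'n::finite cmat"
  assumes r: "realm P" and s: "transpose P = P" and psd: "\<And>x. 0 \<le> Re (qf P x)"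
    and tr: "Re (trace P) \<le> c"
  shows "cmod (P $ i $ j) \<le> c"
proof -
  have d0: "0 \<le> Re (P $ k $ k)" for k using psd[of "axis k 1"] by (simp add: qf_axis)
  have dc: "Re (P $ k $ k) \<le> c" for k
  proof -
    have "Re (P $ k $ k) \<le> (\<Sum>l\<in>UNIV. Re (P $ l $ l))"
      by (rule member_le_sum) (auto simp: d0)
    also have "\<dots> = Re (trace P)" by (simp add: trace_def Re_sum)
    finally show ?thesis using tr by simp
  qed
  have sym: "P $ j $ i = P $ i $ j"
  proof -
    have "transpose P $ j $ i = P $ i $ j" by (simp add: transpose_def)
    then show ?thesis using s by simp
  qed
  have a: "0 \<le> Re (P$i$i) + 2 * Re (P$i$j) + Re (P$j$j)"
    using psd[of "axis i 1 + axis j 1"] by (simp add: qf_axis_plus sym)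
  have b: "0 \<le> Re (P$i$i) - 2 * Re (P$i$j) + Re (P$j$j)"
    using psd[of "axis i 1 - axis j 1"] by (simp add: qf_axis_minus sym)
  have im: "Im (P $ i $ j) = 0" using r by (simp add: realm_Im)
  have "cmod (P $ i $ j) = \<bar>Re (P $ i $ j)\<bar>" using im by (simp add: cmod_def)
  also have "\<dots> \<le> c" using a b dc[of i] dc[of j] by linarith
  finally show ?thesis .
qed

definition S2set :: "'n::finite cmat set \<Rightarrow> real \<Rightarrow> 'n cmat set" where
  "S2set K c = {P. (\<forall>i j. Im (P $ i $ j) = 0) \<and> transpose P = P \<and> (\<forall>g\<in>K. act1 g P = P) \<and>
                   Re (trace P) \<le> c \<and> (\<forall>Y. gY P Y \<le> c)}"

lemma S2_closed: "closed (S2set K c)"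
proof -
  have "S2set K c = (\<Inter>i. \<Inter>j. {P. Im (P $ i $ j) = 0}) \<inter> {P. transpose P = P} \<inter>
     (\<Inter>g\<in>K. {P. act1 g P = P}) \<inter> {P. Re (trace P) \<le> c} \<inter> (\<Inter>Y. {P. gY P Y \<le> c})"
    unfolding S2set_def by auto
  moreover have "closed \<dots>"
    unfolding act1_def gY_def trace_def
    by (intro closed_Int closed_INT ballI closed_Collect_eq closed_Collect_le continuous_intros)
  ultimately show ?thesis by simp
qed

lemma S2_mem:
  assumes "P \<in> S2set K c"
  shows "realm P" "transpose P = P" "\<And>g. g \<in> K \<Longrightarrow> act1 g P = P" "Re (trace P) \<le> c" "\<And>Y. gY P Y \<le> c"
    "PD P" "madj P = P" "invertible P" "\<And>y. (norm y)^2 \<le> c * Re (qf P y)"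
proof -
  show r: "realm P" using assms by (simp add: S2set_def realm_Im)
  show s: "transpose P = P" using assms by (simp add: S2set_def)
  show "\<And>g. g \<in> K \<Longrightarrow> act1 g P = P" "Re (trace P) \<le> c" "\<And>Y. gY P Y \<le> c"
    using assms by (auto simp: S2set_def)
  then have Y: "\<forall>Y. gY P Y \<le> c" by blast
  show pd: "PD P" using Ypos[OF Y] .
  show "madj P = P" using r s madj_real_sym by blast
  show "invertible P" using pd PD_invertible by blast
  show "\<And>y. (norm y)^2 \<le> c * Re (qf P y)" using Ybound[OF Y] by blast
qed

lemma S2_bounded:
  assumes c0: "c > 0"
  shows "bounded (S2set K (c::real) :: 'n::finite cmat set)"
  unfolding bounded_iff
proof (intro exI ballI)
  fix P :: "'n cmat" assume P: "P \<in> S2set K c"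
  note m = S2_mem[OF P]
  have psd: "0 \<le> Re (qf P x)" for x
  proof -
    have "0 \<le> c * Re (qf P x)" using m(9)[of x] by (meson order_trans zero_le_power2)
    then show ?thesis using c0 by (simp add: zero_le_mult_iff)
  qed
  show "norm P \<le> real CARD('n + 'n) * real CARD('n + 'n) * c"
    by (rule norm_entries_bound) (rule entry_bound_PSD[OF m(1) m(2) psd m(4)])
qed

lemma S2_compact: "c > 0 \<Longrightarrow> compact (S2set K c)"
  using S2_bounded S2_closed compact_eq_bounded_closed by blast

lemma norm_trace_le: "cmod (trace A) \<le> real CARD('n::finite) * norm (A::complex^'n^'n)"
proof -
  have "cmod (trace A) \<le> (\<Sum>i\<in>UNIV. cmod (A $ i $ i))" unfolding trace_def by (rule norm_sum)
  also have "\<dots> \<le> (\<Sum>i\<in>(UNIV::'n set). norm A)" by (intro sum_mono entry_le_norm)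
  finally show ?thesis by simp
qed

definition F2 :: "'n::finite cmat \<Rightarrow> real" where
  "F2 P = Re (trace P) + Re (trace (matrix_inv P))"

lemma F2_lip:
  fixes P Q :: "'n::finite cmat"
  assumes P: "P \<in> S2set K c" and Q: "Q \<in> S2set K c" and c0: "c > 0"
  shows "\<bar>F2 P - F2 Q\<bar> \<le> (real CARD('n+'n) + real CARD('n+'n) * (real CARD('n+'n)^3)^2 *
            (real CARD('n + 'n) * real CARD('n + 'n) * c)^2) * norm (P - Q)"
proof -
  let ?N = "real CARD('n+'n)"
  let ?k = "?N^3"
  let ?b = "?N * ?N * c"
  note mP = S2_mem[OF P] and mQ = S2_mem[OF Q]
  have bP: "norm (matrix_inv P) \<le> ?b" using inv_norm_bound[OF mP(8) mP(9)] c0 by simp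
  have bQ: "norm (matrix_inv Q) \<le> ?b" using inv_norm_bound[OF mQ(8) mQ(9)] c0 by simp
  have mm: "norm (A ** B) \<le> ?k * (norm A * norm B)" for A B :: "'n cmat"
    using norm_mmul_le[of A B] by (simp add: power3_eq_cube algebra_simps)
  have "norm (matrix_inv P - matrix_inv Q) = norm (matrix_inv P ** (Q - P) ** matrix_inv Q)"
    by (simp add: inv_diff mP(8) mQ(8))
  also have "\<dots> \<le> ?k * (norm (matrix_inv P ** (Q - P)) * norm (matrix_inv Q))" by (rule mm)
  also have "\<dots> \<le> ?k * ((?k * (norm (matrix_inv P) * norm (Q - P))) * norm (matrix_inv Q))"
    by (intro mult_left_mono mult_right_mono mm) auto
  also have "\<dots> \<le> ?k * ((?k * (?b * norm (Q - P))) * ?b)"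
    by (intro mult_left_mono mult_right_mono mult_mono bP bQ) (auto simp: c0 less_imp_le)
  finally have i: "norm (matrix_inv P - matrix_inv Q) \<le> ?k^2 * ?b^2 * norm (P - Q)"
    by (simp add: power2_eq_square norm_minus_commute algebra_simps)
  have t1: "\<bar>Re (trace P) - Re (trace Q)\<bar> \<le> ?N * norm (P - Q)"
    using norm_trace_le[of "P - Q"] abs_Re_le_cmod[of "trace (P - Q)"] by (simp add: trace_sub)
  have "\<bar>Re (trace (matrix_inv P)) - Re (trace (matrix_inv Q))\<bar> \<le> ?N * norm (matrix_inv P - matrix_inv Q)"
    using norm_trace_le[of "matrix_inv P - matrix_inv Q"] abs_Re_le_cmod[of "trace (matrix_inv P - matrix_inv Q)"]
    by (simp add: trace_sub)
  also have "\<dots> \<le> ?N * (?k^2 * ?b^2 * norm (P - Q))" by (intro mult_left_mono i) simp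
  finally have t2: "\<bar>Re (trace (matrix_inv P)) - Re (trace (matrix_inv Q))\<bar> \<le> ?N * (?k^2 * ?b^2 * norm (P - Q))" .
  define u where "u = Re (trace P) - Re (trace Q)"
  define v where "v = Re (trace (matrix_inv P)) - Re (trace (matrix_inv Q))"
  define U where "U = ?N * norm (P - Q)"
  define V where "V = ?N * (?k^2 * ?b^2 * norm (P - Q))"
  have "F2 P - F2 Q = u + v" unfolding F2_def u_def v_def by simp
  moreover have "\<bar>u\<bar> \<le> U" "\<bar>v\<bar> \<le> V" using t1 t2 unfolding u_def v_def U_def V_def by auto
  ultimately have "\<bar>F2 P - F2 Q\<bar> \<le> U + V" by linarith
  also have "U + V = (?N + ?N * (?k)^2 * ?b^2) * norm (P - Q)" unfolding U_def V_def by (simp add: algebra_simps)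
  finally show ?thesis by simp
qed

lemma F2_cont:
  fixes K :: "'n::finite cmat set"
  assumes c0: "c > 0" shows "continuous_on (S2set K c) F2"
  unfolding continuous_on_iff
proof (intro ballI allI impI)
  fix x e assume x: "x \<in> S2set K c" and e: "(e::real) > 0"
  define L where "L = (real CARD('n+'n) + real CARD('n+'n) * (real CARD('n+'n)^3)^2 *
            (real CARD('n + 'n) * real CARD('n + 'n) * c)^2) + 1"
  have L0: "L > 0" unfolding L_def by (simp add: add_nonneg_pos)
  show "\<exists>d>0. \<forall>x'\<in>S2set K c. dist x' x < d \<longrightarrow> dist (F2 x') (F2 x) < e"
  proof (intro exI[of _ "e / L"] conjI ballI impI)
    show "e / L > 0" using e L0 by simp
    fix y assume y: "y \<in> S2set K c" and d: "dist y x < e / L"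
    have "\<bar>F2 y - F2 x\<bar> \<le> (L - 1) * norm (y - x)" using F2_lip[OF y x c0] unfolding L_def by simp
    also have "\<dots> \<le> L * norm (y - x)" by (simp add: algebra_simps)
    also have "\<dots> < e" using d L0 by (simp add: dist_norm field_simps)
    finally show "dist (F2 y) (F2 x) < e" by (simp add: dist_real_def)
  qed
qed

definition iota :: "'n::finite cmat \<Rightarrow> 'n cmat" where
  "iota P = transpose Om ** matrix_inv P ** Om"

lemma qf_act1: assumes "realm A" shows "qf (act1 A Q) x = qf Q (A *v x)"
proof -
  have "qf (act1 A Q) x = bil (cconj x) (transpose A *v (Q *v (A *v x)))"
    by (simp add: act1_def qf_def matrix_vector_mul_assoc matrix_mul_assoc del: transpose_matrix_vector)
  also have "\<dots> = bil (A *v cconj x) (Q *v (A *v x))" by (simp only: bil_mat)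
  also have "\<dots> = qf Q (A *v x)" using assms by (simp add: qf_def cconj_real_mult)
  finally show ?thesis .
qed

lemma sym_inv:
  assumes "transpose P = P" "invertible (P::'n::finite cmat)"
  shows "transpose (matrix_inv P) = matrix_inv P"
proof -
  have "transpose (matrix_inv P) ** P = mat 1"
    by (metis assms inv_right matrix_transpose_mul transpose_mat)
  then show ?thesis by (metis inv_unique_left)
qed

lemma qf_inv:
  assumes r: "realm P" and s: "transpose P = P" and i: "invertible (P::'n::finite cmat)"
  shows "qf (matrix_inv P) (P *v w) = qf P w"
proof -
  have "qf (matrix_inv P) (P *v w) = bil (cconj (P *v w)) w"
    by (simp add: qf_def matrix_vector_mul_assoc inv_left[OF i])
  also have "\<dots> = bil (P *v cconj w) w" using r by (simp add: cconj_real_mult)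
  also have "\<dots> = qf P w" by (simp add: bil_mat s qf_def)
  finally show ?thesis .
qed

lemma trace_conj_Om: "trace (transpose Om ** X ** Om) = trace (X::'n::finite cmat)"
proof -
  have "trace (transpose Om ** X ** Om) = trace (transpose Om ** (X ** Om))" by (simp add: matrix_mul_assoc)
  also have "\<dots> = trace ((X ** Om) ** transpose Om)" by (rule trace_mul_sym)
  also have "\<dots> = trace X" by (simp add: matrix_mul_assoc[symmetric] Om_orth)
  finally show ?thesis .
qed

lemma Om_invertible: "invertible (Om::'n::finite cmat)"
  using Om_orth invertible_def by blast

lemma inv_iota:
  assumes i: "invertible (P::'n::finite cmat)"
  shows "matrix_inv (iota P) = transpose Om ** P ** Om"
proof (rule inv_unique_right)
  have "iota P ** (transpose Om ** P ** Om) = transpose Om ** matrix_inv P ** (Om ** transpose Om) ** P ** Om"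
    by (simp add: iota_def matrix_mul_assoc)
  also have "\<dots> = transpose Om ** (matrix_inv P ** P) ** Om" by (simp add: Om_orth matrix_mul_assoc)
  also have "\<dots> = mat 1" by (simp add: inv_left[OF i] Om_orth)
  finally show "iota P ** (transpose Om ** P ** Om) = mat 1" .
qed

lemma inv_conj_invariant:
  fixes g P :: "'n::finite cmat"
  assumes ig: "invertible g" and iP: "invertible P" and a: "act1 g P = P"
  shows "g ** matrix_inv P ** transpose g = matrix_inv P"
proof -
  have "transpose g ** P = P ** matrix_inv g"
  proof -
    have "transpose g ** P = transpose g ** P ** (g ** matrix_inv g)" by (simp add: inv_right[OF ig])
    also have "\<dots> = act1 g P ** matrix_inv g" by (simp add: act1_def matrix_mul_assoc)
    finally show ?thesis using a by simp
  qed
  then have "(g ** matrix_inv P ** transpose g) ** P = (g ** matrix_inv P) ** (P ** matrix_inv g)"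
    by (simp add: matrix_mul_assoc[symmetric])
  also have "\<dots> = g ** (matrix_inv P ** P) ** matrix_inv g" by (simp add: matrix_mul_assoc)
  also have "\<dots> = mat 1" by (simp add: inv_left[OF iP] inv_right[OF ig])
  finally show ?thesis by (metis inv_unique_left)
qed

lemma iota_invariant:
  fixes g P :: "'n::finite cmat"
  assumes sg: "sympl g" and iP: "invertible P" and a: "act1 g P = P"
  shows "act1 g (iota P) = iota P"
proof -
  have ig: "invertible g" using sg sympl_invertible by blast
  let ?Q = "matrix_inv P"
  have q: "g ** ?Q ** transpose g = ?Q" by (rule inv_conj_invariant[OF ig iP a])
  have s1: "transpose g ** Om ** g = Om" using sg by (simp add: sympl_def)
  have s2: "transpose g ** transpose Om ** g = transpose Om"
    using arg_cong[OF s1, of transpose] by (simp add: matrix_transpose_mul matrix_mul_assoc)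
  have "act1 g (iota P) = transpose g ** transpose Om ** (g ** ?Q ** transpose g) ** Om ** g"
    by (simp add: act1_def iota_def q matrix_mul_assoc)
  also have "\<dots> = (transpose g ** transpose Om ** g) ** ?Q ** (transpose g ** Om ** g)"
    by (simp add: matrix_mul_assoc)
  also have "\<dots> = iota P" by (simp add: s1 s2 iota_def)
  finally show ?thesis .
qed

lemma iota_S2:
  fixes K :: "'n::finite cmat set"
  assumes Ksym: "\<And>g. g \<in> K \<Longrightarrow> sympl g" and P: "P \<in> S2set K c" and c0: "c > 0"
  shows "iota P \<in> S2set K c" "F2 (iota P) = F2 P"
proof -
  note m = S2_mem[OF P]
  let ?Q = "matrix_inv P"
  have rQ: "realm ?Q" using realm_inv m(1) m(8) by blast
  have sQ: "transpose ?Q = ?Q" using sym_inv m(2) m(8) by blast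
  have r: "realm (iota P)" unfolding iota_def
    by (intro realm_mult realm_transpose realm_Om rQ)
  have s: "transpose (iota P) = iota P"
    unfolding iota_def by (simp add: matrix_transpose_mul sQ matrix_mul_assoc)
  have inv: "act1 g (iota P) = iota P" if "g \<in> K" for g
    using iota_invariant Ksym m(3) m(8) that by blast
  have trQ: "Re (trace ?Q) \<le> c" using gY_eq[OF m(7) m(6)] m(5)[of ?Q] by simp
  have tr: "Re (trace (iota P)) = Re (trace ?Q)" unfolding iota_def by (simp add: trace_conj_Om)
  have pd: "PD (iota P)" unfolding PD_def
  proof (intro allI impI)
    fix x :: "'n cvec" assume x: "x \<noteq> 0"
    have "iota P = act1 Om ?Q" by (simp add: iota_def act1_def)
    then have q1: "qf (iota P) x = qf ?Q (Om *v x)" using qf_act1[OF realm_Om] by simp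
    define w where "w = ?Q *v (Om *v x)"
    have Pw: "P *v w = Om *v x" unfolding w_def by (simp add: matrix_vector_mul_assoc matrix_mul_assoc inv_right[OF m(8)])
    have "Om *v x \<noteq> 0" using x inj_matrix_vector_mult[OF Om_invertible] by (metis injD matrix_vector_mult_0_right)
    then have "w \<noteq> 0" using Pw by auto
    then have "Re (qf P w) > 0" using m(6) by (simp add: PD_def)
    then show "Re (qf (iota P) x) > 0" using q1 Pw qf_inv[OF m(1) m(2) m(8)] by metis
  qed
  have h: "madj (iota P) = iota P" using r s madj_real_sym by blast
  have itr: "Re (trace (matrix_inv (iota P))) = Re (trace P)"
    by (simp add: inv_iota[OF m(8)] trace_conj_Om)
  have gy: "gY (iota P) Y \<le> c" for Y using gY_le[OF h pd, of Y] itr m(4) by simp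
  show "iota P \<in> S2set K c"
    unfolding S2set_def using r s inv tr trQ gy by (auto simp: realm_Im)
  show "F2 (iota P) = F2 P" unfolding F2_def using tr itr by simp
qed

lemma mid_S2:
  assumes A: "A \<in> S2set K c" and B: "B \<in> S2set K c"
  shows "(1/2) *\<^sub>R (A + B) \<in> S2set K c"
proof -
  note a = S2_mem[OF A] and b = S2_mem[OF B]
  let ?M = "(1/2) *\<^sub>R (A + B)"
  have "realm ?M" using a(1) b(1) by (intro realm_scaleR realm_add)
  moreover have "transpose ?M = ?M" using a(2) b(2) by (simp add: transpose_scalar transpose_add)
  moreover have "act1 g ?M = ?M" if "g \<in> K" for g
    using a(3)[OF that] b(3)[OF that] by (simp add: act1_scaleR act1_add)
  moreover have "Re (trace ?M) \<le> c" using a(4) b(4) by (simp add: trace_scaleR trace_add)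
  moreover have "gY ?M Y \<le> c" for Y using a(5)[of Y] b(5)[of Y] by (simp add: gY_mid)
  ultimately show ?thesis unfolding S2set_def by (auto simp: realm_Im)
qed

lemma gY_zero: "gY P 0 = 0" by (simp add: gY_def madj_def cnjm_def transpose_def trace_def)

lemma stage2:
  fixes K :: "'n::finite cmat set"
  assumes cK: "compact K" and gK: "matgroup K" and sK: "K \<subseteq> SpR"
  shows "\<exists>P c. realm P \<and> transpose P = P \<and> PD P \<and> (\<forall>g\<in>K. act1 g P = P) \<and> iota P = P \<and> c > 0 \<and>
           (\<forall>x. (norm x)^2 \<le> c * Re (qf P x))"
proof -
  obtain P1 where P1: "realm P1" "transpose P1 = P1" "PD P1" "\<forall>g\<in>K. act1 g P1 = P1"
    using stage1[OF cK gK sK] by blast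
  have Ksym: "\<And>g. g \<in> K \<Longrightarrow> sympl g" using sK by (auto simp: SpR_iff)
  have h1: "madj P1 = P1" using P1 madj_real_sym by blast
  have ti: "0 \<le> Re (trace (matrix_inv P1))" using gY_le[OF h1 P1(3), of 0] by (simp add: gY_zero)
  have tp: "0 \<le> Re (trace P1)"
  proof -
    have "0 \<le> (\<Sum>i\<in>UNIV. Re (qf P1 (axis i 1)))"
      using P1(3) by (intro sum_nonneg) (auto simp: PD_def less_imp_le axis_eq_0_iff)
    then show ?thesis by (simp add: qf_axis trace_def Re_sum)
  qed
  define c where "c = Re (trace P1) + Re (trace (matrix_inv P1)) + 1"
  have c0: "c > 0" unfolding c_def using ti tp by simp
  have gyc: "\<forall>Y. gY P1 Y \<le> c"
  proof
    fix Y show "gY P1 Y \<le> c" using gY_le[OF h1 P1(3), of Y] tp unfolding c_def by linarith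
  qed
  have P1S: "P1 \<in> S2set K c"
    unfolding S2set_def using P1 gyc ti tp by (auto simp: realm_Im c_def)
  obtain P2 where P2: "P2 \<in> S2set K c" and P2min: "\<And>Q. Q \<in> S2set K c \<Longrightarrow> F2 P2 \<le> F2 Q"
    using continuous_attains_inf[OF S2_compact[OF c0] _ F2_cont[OF c0]] P1S by blast
  note m = S2_mem[OF P2]
  have iS: "iota P2 \<in> S2set K c" and iF: "F2 (iota P2) = F2 P2"
    using iota_S2[OF Ksym P2 c0] by blast+
  have fixed: "iota P2 = P2"
  proof (rule ccontr)
    assume ne: "iota P2 \<noteq> P2"
    define M where "M = (1/2) *\<^sub>R (P2 + iota P2)"
    have MS: "M \<in> S2set K c" unfolding M_def using mid_S2[OF P2 iS] .
    note mM = S2_mem[OF MS] and mi = S2_mem[OF iS]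
    have st: "Re (trace (matrix_inv M)) < (Re (trace (matrix_inv P2)) + Re (trace (matrix_inv (iota P2)))) / 2"
      using strict_conv_trinv[OF m(7) m(6) mi(7) mi(6) M_def mM(7) mM(6)] ne by metis
    have trM: "Re (trace M) = (Re (trace P2) + Re (trace (iota P2))) / 2"
      unfolding M_def by (simp add: trace_scaleR trace_add)
    have "F2 M < (F2 P2 + F2 (iota P2)) / 2" unfolding F2_def using st trM by simp
    then have "F2 M < F2 P2" using iF by simp
    then show False using P2min[OF MS] by simp
  qed
  show ?thesis
    using m(1) m(2) m(6) m(3) fixed c0 m(9) by blast
qed

lemma J_props:
  fixes P :: "'n::finite cmat"
  assumes r: "realm P" and s: "transpose P = P" and pd: "PD P" and io: "iota P = P"
  defines "J \<equiv> matrix_inv P ** Om"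
  shows "realm J" "J ** J = - mat 1" "P ** J = Om" "sympl J"
proof -
  have i: "invertible P" using pd PD_invertible by blast
  let ?Q = "matrix_inv P"
  have rQ: "realm ?Q" using realm_inv r i by blast
  have sQ: "transpose ?Q = ?Q" using sym_inv s i by blast
  show "realm J" unfolding J_def by (intro realm_mult rQ realm_Om)
  have e0: "transpose Om ** ?Q ** Om = P" using io by (simp add: iota_def)
  have e1: "?Q ** Om = Om ** P"
  proof -
    have "Om ** P = Om ** (transpose Om ** ?Q ** Om)" using e0 by simp
    also have "\<dots> = (Om ** transpose Om) ** ?Q ** Om" by (simp add: matrix_mul_assoc)
    finally show ?thesis by (simp add: Om_orth)
  qed
  show "J ** J = - mat 1"
  proof -
    have "J ** J = (Om ** P) ** (?Q ** Om)" unfolding J_def using e1 by simp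
    also have "\<dots> = Om ** (P ** ?Q) ** Om" by (simp add: matrix_mul_assoc)
    also have "\<dots> = - mat 1" by (simp add: inv_right[OF i] Om_Om)
    finally show ?thesis .
  qed
  show "P ** J = Om" unfolding J_def by (simp add: matrix_mul_assoc inv_right[OF i])
  show "sympl J"
  proof -
    have "transpose J ** Om ** J = (transpose Om ** ?Q ** Om) ** ?Q ** Om"
      unfolding J_def by (simp add: matrix_transpose_mul sQ matrix_mul_assoc)
    also have "\<dots> = P ** ?Q ** Om" using e0 by simp
    also have "\<dots> = Om" by (simp add: inv_right[OF i])
    finally show ?thesis by (simp add: sympl_def)
  qed
qed

lemma J_commute:
  fixes P g :: "'n::finite cmat"
  assumes pd: "PD P" and sg: "sympl g" and a: "act1 g P = P"
  shows "g ** (matrix_inv P ** Om) = (matrix_inv P ** Om) ** g"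
proof -
  have i: "invertible P" using pd PD_invertible by blast
  have ig: "invertible g" using sg sympl_invertible by blast
  let ?Q = "matrix_inv P"
  have q: "g ** ?Q ** transpose g = ?Q" by (rule inv_conj_invariant[OF ig i a])
  have s1: "transpose g ** Om ** g = Om" using sg by (simp add: sympl_def)
  have "(?Q ** Om) ** g = (g ** ?Q ** transpose g) ** Om ** g" using q by simp
  also have "\<dots> = g ** ?Q ** (transpose g ** Om ** g)" by (simp add: matrix_mul_assoc)
  also have "\<dots> = g ** (?Q ** Om)" by (simp add: s1 matrix_mul_assoc)
  finally show ?thesis by simp
qed

lemma JT_Om: "sympl J \<Longrightarrow> J ** J = - mat 1 \<Longrightarrow> transpose J ** Om = - (Om ** J)"
proof -
  assume sj: "sympl J" and jj: "J ** J = - mat 1"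
  have "transpose J ** Om ** J ** J = Om ** J" using sj by (simp add: sympl_def)
  then have "- (transpose J ** Om) = Om ** J"
    by (simp add: matrix_mul_assoc[symmetric] jj mat_mul_neg_right)
  then show ?thesis by (metis minus_minus)
qed

definition GJ :: "'n::finite cmat \<Rightarrow> 'n cmat set" where
  "GJ J = {g. realm g \<and> sympl g \<and> g ** J = J ** g}"

lemma GJ_SpR: "GJ J \<subseteq> SpR" by (auto simp: GJ_def SpR_iff)

lemma GJ_matgroup: "matgroup (GJ J)"
  unfolding matgroup_def
proof (intro conjI ballI)
  show "mat 1 \<in> GJ J" by (simp add: GJ_def realm_mat1 sympl_mat1)
  fix x y assume x: "x \<in> GJ J" and y: "y \<in> GJ J"
  show "x ** y \<in> GJ J" using x y unfolding GJ_def
    by (auto simp: realm_mult sympl_mult) (metis matrix_mul_assoc)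
next
  fix x assume x: "x \<in> GJ J"
  then have rx: "realm x" and sx: "sympl x" and cx: "x ** J = J ** x" by (auto simp: GJ_def)
  have ix: "invertible x" using sx sympl_invertible by blast
  show "invertible x" by (rule ix)
  let ?h = "matrix_inv x"
  have "?h ** J = ?h ** J ** (x ** ?h)" by (simp add: inv_right[OF ix])
  also have "\<dots> = ?h ** (J ** x) ** ?h" by (simp add: matrix_mul_assoc)
  also have "\<dots> = ?h ** (x ** J) ** ?h" by (simp add: cx)
  also have "\<dots> = (?h ** x) ** J ** ?h" by (simp add: matrix_mul_assoc)
  also have "\<dots> = J ** ?h" by (simp add: inv_left[OF ix])
  finally show "?h \<in> GJ J" unfolding GJ_def using realm_inv[OF rx ix] sympl_inv[OF sx] by simp
qed

lemma GJ_closed: "closed (GJ J)"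
proof -
  have "GJ J = (\<Inter>i. \<Inter>j. {g. Im (g $ i $ j) = 0}) \<inter> {g. transpose g ** Om ** g = Om} \<inter> {g. g ** J = J ** g}"
    unfolding GJ_def sympl_def by (auto simp: realm_Im)
  moreover have "closed \<dots>"
    by (intro closed_Int closed_INT ballI closed_Collect_eq continuous_intros)
  ultimately show ?thesis by simp
qed

lemma GJ_bounded:
  fixes P J :: "'n::finite cmat"
  assumes PJ: "P ** J = Om" and jj: "J ** J = - mat 1" and sj: "sympl J"
    and b: "\<And>x. (norm x)^2 \<le> c * Re (qf P x)" and c0: "c > 0"
  shows "bounded (GJ J)"
  unfolding bounded_iff
proof (intro exI ballI)
  fix g assume g: "g \<in> GJ J"
  then have rg: "realm g" and sg: "sympl g" and cg: "g ** J = J ** g" by (auto simp: GJ_def)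
  have P': "P = - (Om ** J)"
  proof -
    have "P ** J ** J = Om ** J" using PJ by simp
    then have "- P = Om ** J" by (simp add: matrix_mul_assoc[symmetric] jj mat_mul_neg_right)
    then show ?thesis by (metis minus_minus)
  qed
  have inv: "act1 g P = P"
  proof -
    have "act1 g P = - (transpose g ** Om ** (J ** g))" by (simp add: act1_def P' mat_mul_neg_right mat_mul_neg_left matrix_mul_assoc)
    also have "\<dots> = - ((transpose g ** Om ** g) ** J)" by (simp add: cg[symmetric] matrix_mul_assoc)
    also have "\<dots> = P" using sg by (simp add: sympl_def P')
    finally show ?thesis .
  qed
  define D where "D = c * norm P + 1"
  have entry: "cmod (g $ i $ j) \<le> D" for i j
  proof -
    define y where "y = g *v axis j 1"
    have yi: "y $ i = g $ i $ j" unfolding y_def by (rule mv_axis)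
    have "(norm y)^2 \<le> c * Re (qf P y)" by (rule b)
    also have "qf P y = qf (act1 g P) (axis j 1)" unfolding y_def using qf_act1[OF rg] by simp
    also have "\<dots> = P $ j $ j" by (simp add: inv qf_axis)
    also have "c * Re (P $ j $ j) \<le> c * norm P"
      using c0 complex_Re_le_cmod[of "P$j$j"] entry_le_norm[of P j j] by (intro mult_left_mono) auto
    finally have ny: "(norm y)^2 \<le> c * norm P" .
    have "norm y \<le> D"
    proof (cases "norm y \<le> 1")
      case True then show ?thesis unfolding D_def using c0 by (smt (verit) mult_nonneg_nonneg norm_ge_zero)
    next
      case False then have "norm y * 1 \<le> norm y * norm y" by (intro mult_left_mono) auto
      then have "norm y \<le> (norm y)^2" by (simp add: power2_eq_square)
      then show ?thesis using ny unfolding D_def by linarith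
    qed
    then show ?thesis using Finite_Cartesian_Product.norm_nth_le[of y i] yi by simp
  qed
  show "norm g \<le> real CARD('n + 'n) * real CARD('n + 'n) * D"
    by (rule norm_entries_bound) (rule entry)
qed

lemma J_exists:
  fixes K :: "'n::finite cmat set"
  assumes mc: "max_compact_subgroup K"
  shows "\<exists>J P c. realm J \<and> J ** J = - mat 1 \<and> sympl J \<and> P ** J = Om \<and> realm P \<and> transpose P = P \<and>
            c > 0 \<and> (\<forall>x. (norm x)^2 \<le> c * Re (qf P x)) \<and> K = GJ J"
proof -
  have sK: "K \<subseteq> SpR" and gK: "matgroup K" and cK: "compact K"
    and maxK: "\<And>H. H \<subseteq> SpR \<Longrightarrow> matgroup H \<Longrightarrow> compact H \<Longrightarrow> K \<subseteq> H \<Longrightarrow> H = K"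
    using mc unfolding max_compact_subgroup_def by blast+
  obtain P c where P: "realm P" "transpose P = P" "PD P" "\<forall>g\<in>K. act1 g P = P" "iota P = P" "c > 0"
    "\<forall>x. (norm x)^2 \<le> c * Re (qf P x)"
    using stage2[OF cK gK sK] by blast
  define J where "J = matrix_inv P ** Om"
  have J: "realm J" "J ** J = - mat 1" "P ** J = Om" "sympl J"
    using J_props[OF P(1) P(2) P(3) P(5)] unfolding J_def by blast+
  have KG: "K \<subseteq> GJ J"
  proof
    fix g assume g: "g \<in> K"
    then have "realm g" "sympl g" using sK by (auto simp: SpR_iff)
    moreover have "g ** J = J ** g" unfolding J_def using J_commute P(3) \<open>sympl g\<close> P(4) g by blast
    ultimately show "g \<in> GJ J" by (simp add: GJ_def)
  qed
  have "compact (GJ J)"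
    using GJ_bounded[OF J(3) J(2) J(4)] P(6) P(7) GJ_closed compact_eq_bounded_closed by blast
  then have "GJ J = K" using maxK GJ_SpR GJ_matgroup KG by blast
  then show ?thesis using J P by metis
qed

lemma sc_left: "(a *\<^sub>R A) ** B = a *\<^sub>R (A ** (B::'n::finite cmat))"
  by (simp add: scalar_matrix_assoc)
lemma sc_right: "A ** (a *\<^sub>R B) = a *\<^sub>R (A ** (B::'n::finite cmat))"
  by (simp add: matrix_scalar_ac scalar_matrix_assoc)

lemma mpow_scaleR: "mpow (r *\<^sub>R X) k = (r^k) *\<^sub>R mpow X k"
  by (induction k) (simp_all add: sc_left sc_right mult.commute)

lemma mpow_J:
  assumes jj: "J ** J = - mat 1"
  shows "mpow J k = (if even k then ((-1)^(k div 2)) *\<^sub>R mat 1 else ((-1)^(k div 2)) *\<^sub>R J)"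
proof (induction k)
  case 0 then show ?case by simp
next
  case (Suc k)
  show ?case
  proof (cases "even k")
    case True then show ?thesis using Suc by (simp add: sc_right)
  next
    case False
    then have "Suc k div 2 = Suc (k div 2)" by presburger
    then show ?thesis using Suc False by (simp add: sc_right jj)
  qed
qed

lemma mexp_J:
  assumes jj: "J ** J = - mat 1"
  shows "mexp (t *\<^sub>R J) = cos t *\<^sub>R mat 1 + sin t *\<^sub>R J"
proof -
  have tm: "inverse (fact k) *\<^sub>R mpow (t *\<^sub>R J) k = (cos_coeff k * t^k) *\<^sub>R mat 1 + (sin_coeff k * t^k) *\<^sub>R J" for k
  proof (cases "even k")
    case True then show ?thesis by (simp add: mpow_scaleR mpow_J[OF jj] cos_coeff_def sin_coeff_def field_simps)
  next
    case False
    then have "(k - 1) div 2 = k div 2" by presburger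
    then show ?thesis using False by (simp add: mpow_scaleR mpow_J[OF jj] cos_coeff_def sin_coeff_def field_simps)
  qed
  have "(\<lambda>k. (cos_coeff k * t^k) *\<^sub>R mat 1 + (sin_coeff k * t^k) *\<^sub>R J) sums (cos t *\<^sub>R mat 1 + sin t *\<^sub>R (J::'a::finite cmat))"
    using cos_converges[of t] sin_converges[of t]
    by (intro sums_add sums_scaleR_left) simp_all
  then have "(\<lambda>k. inverse (fact k) *\<^sub>R mpow (t *\<^sub>R J) k) sums (cos t *\<^sub>R mat 1 + sin t *\<^sub>R J)"
    by (simp add: tm)
  then show ?thesis unfolding mexp_def by (rule sums_unique[symmetric])
qed

definition iJ :: "'n::finite cmat \<Rightarrow> 'n cmat" where
  "iJ J = (\<chi> i j. \<i> * J $ i $ j)"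

lemma iJ_sq: assumes jj: "J ** J = - mat 1" shows "iJ J ** iJ J = mat 1"
proof -
  have "(iJ J ** iJ J) $ i $ j = - ((J ** J) $ i $ j)" for i j
    by (simp add: iJ_def matrix_matrix_mult_def sum_negf[symmetric] algebra_simps)
  then show ?thesis using jj by (simp add: vec_eq_iff)
qed

lemma mpow_iJ: assumes jj: "J ** J = - mat 1"
  shows "mpow (iJ J) k = (if even k then mat 1 else iJ J)"
  by (induction k) (auto simp: iJ_sq[OF jj] matrix_mul_assoc)

lemma half_sum: "(1/2) *\<^sub>R (A + B) + (1/2) *\<^sub>R (A - B) = (A::'a::real_vector)"
proof -
  have "(1/2) *\<^sub>R (A + B) + (1/2) *\<^sub>R (A - B) = (1/2) *\<^sub>R ((A + B) + (A - B))"
    by (rule scaleR_add_right[symmetric])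
  also have "(A + B) + (A - B) = A + A" by simp
  also have "(1/2) *\<^sub>R (A + A) = A" by (simp add: scaleR_2[symmetric])
  finally show ?thesis .
qed
lemma half_diff: "(1/2) *\<^sub>R (A + B) - (1/2) *\<^sub>R (A - B) = (B::'a::real_vector)"
proof -
  have "(1/2) *\<^sub>R (A + B) - (1/2) *\<^sub>R (A - B) = (1/2) *\<^sub>R ((A + B) - (A - B))"
    by (rule scaleR_diff_right[symmetric])
  also have "(A + B) - (A - B) = B + B" by simp
  also have "(1/2) *\<^sub>R (B + B) = B" by (simp add: scaleR_2[symmetric])
  finally show ?thesis .
qed

lemma mexp_iJ:
  assumes jj: "J ** J = - mat 1"
  shows "mexp (s *\<^sub>R iJ J) = exp s *\<^sub>R ((1/2) *\<^sub>R (mat 1 + iJ J)) + exp (- s) *\<^sub>R ((1/2) *\<^sub>R (mat 1 - iJ J))"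
proof -
  let ?P1 = "(1/2) *\<^sub>R (mat 1 + iJ J)" and ?P2 = "(1/2) *\<^sub>R (mat 1 - iJ J)"
  have tm: "inverse (fact k) *\<^sub>R mpow (s *\<^sub>R iJ J) k = (s^k /\<^sub>R fact k) *\<^sub>R ?P1 + ((-s)^k /\<^sub>R fact k) *\<^sub>R ?P2" for k
  proof -
    let ?c = "s^k /\<^sub>R fact k"
    have lhs: "inverse (fact k) *\<^sub>R mpow (s *\<^sub>R iJ J) k = ?c *\<^sub>R mpow (iJ J) k"
      by (simp add: mpow_scaleR)
    show ?thesis
    proof (cases "even k")
      case True
      then have "(-s)^k /\<^sub>R fact k = ?c" by simp
      then have "?c *\<^sub>R ?P1 + ((-s)^k /\<^sub>R fact k) *\<^sub>R ?P2 = ?c *\<^sub>R (?P1 + ?P2)"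
        by (simp only: scaleR_add_right)
      also have "?P1 + ?P2 = mat 1" by (rule half_sum)
      finally show ?thesis using True lhs by (simp add: mpow_iJ[OF jj])
    next
      case False
      then have "(-s)^k /\<^sub>R fact k = - ?c" by simp
      then have "?c *\<^sub>R ?P1 + ((-s)^k /\<^sub>R fact k) *\<^sub>R ?P2 = ?c *\<^sub>R (?P1 - ?P2)"
        by (simp add: scaleR_diff_right)
      also have "?P1 - ?P2 = iJ J" by (rule half_diff)
      finally show ?thesis using False lhs by (simp add: mpow_iJ[OF jj])
    qed
  qed
  have "(\<lambda>k. (s^k /\<^sub>R fact k) *\<^sub>R ?P1 + ((-s)^k /\<^sub>R fact k) *\<^sub>R ?P2) sums (exp s *\<^sub>R ?P1 + exp (-s) *\<^sub>R ?P2)"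
    using exp_converges[of s] exp_converges[of "-s"]
    by (intro sums_add sums_scaleR_left)
  then have "(\<lambda>k. inverse (fact k) *\<^sub>R mpow (s *\<^sub>R iJ J) k) sums (exp s *\<^sub>R ?P1 + exp (-s) *\<^sub>R ?P2)"
    by (simp only: tm)
  then show ?thesis unfolding mexp_def by (rule sums_unique[symmetric])
qed

lemma cs_GJ:
  assumes rJ: "realm J" and sJ: "sympl J" and jj: "J ** J = - mat 1" and ab: "a^2 + b^2 = 1"
  shows "a *\<^sub>R mat 1 + b *\<^sub>R J \<in> GJ J"
proof -
  let ?g = "a *\<^sub>R mat 1 + b *\<^sub>R J"
  have r: "realm ?g" by (intro realm_add realm_scaleR realm_mat1 rJ)
  have c: "?g ** J = J ** ?g"
    by (simp add: mat_mul_add_left mat_mul_add_right sc_left sc_right)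
  have jo: "transpose J ** Om = - (Om ** J)" using JT_Om[OF sJ jj] .
  have jom: "transpose J ** Om ** J = Om" using sJ by (simp add: sympl_def)
  have "transpose ?g ** Om ** ?g = (a *\<^sub>R mat 1 + b *\<^sub>R transpose J) ** Om ** (a *\<^sub>R mat 1 + b *\<^sub>R J)"
    by (simp add: transpose_add transpose_scalar)
  also have "\<dots> = (a * a) *\<^sub>R Om + (a * b) *\<^sub>R (Om ** J) + (a * b) *\<^sub>R (transpose J ** Om) + (b * b) *\<^sub>R (transpose J ** Om ** J)"
    by (simp add: mat_mul_add_left mat_mul_add_right sc_left sc_right algebra_simps)
  also have "\<dots> = (a * a + b * b) *\<^sub>R Om" by (simp only: jom) (simp add: jo scaleR_add_left)
  also have "\<dots> = Om" using ab by (simp add: power2_eq_square)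
  finally have "sympl ?g" by (simp add: sympl_def)
  then show ?thesis using r c by (simp add: GJ_def)
qed

lemma lie_J:
  assumes rJ: "realm J" and sJ: "sympl J" and jj: "J ** J = - mat 1"
  shows "s *\<^sub>R J \<in> lie_algebra (GJ J)"
  unfolding lie_algebra_def
proof (intro CollectI allI)
  fix t :: real
  have "mexp (t *\<^sub>R (s *\<^sub>R J)) = cos (t * s) *\<^sub>R mat 1 + sin (t * s) *\<^sub>R J"
    using mexp_J[OF jj, of "t * s"] by simp
  then show "mexp (t *\<^sub>R (s *\<^sub>R J)) \<in> GJ J" using cs_GJ[OF rJ sJ jj] by simp
qed

lemma iJ_scaleR: "(\<chi> i j. \<i> * (s *\<^sub>R J) $ i $ j) = s *\<^sub>R iJ J"
proof -
  have c: "\<And>B i j. (s *\<^sub>R B)$i$j = of_real s * (B::'n::finite cmat)$i$j"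
    by (metis vector_scaleR_component scaleR_conv_of_real)
  show ?thesis by (simp add: iJ_def vec_eq_iff c)
qed

lemma complexif_J:
  assumes rJ: "realm J" and sJ: "sympl J" and jj: "J ** J = - mat 1"
  shows "exp s *\<^sub>R ((1/2) *\<^sub>R (mat 1 + iJ J)) + exp (- s) *\<^sub>R ((1/2) *\<^sub>R (mat 1 - iJ J)) \<in> complexification (GJ J)"
proof -
  have "mat 1 \<in> GJ J" using GJ_matgroup[of J] by (simp add: matgroup_def)
  moreover have "s *\<^sub>R J \<in> lie_algebra (GJ J)" by (rule lie_J[OF rJ sJ jj])
  moreover have "mat 1 ** mexp (\<chi> i j. \<i> * (s *\<^sub>R J) $ i $ j) =
      exp s *\<^sub>R ((1/2) *\<^sub>R (mat 1 + iJ J)) + exp (- s) *\<^sub>R ((1/2) *\<^sub>R (mat 1 - iJ J))"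
    by (simp only: iJ_scaleR mexp_iJ[OF jj] matrix_mul_lid)
  ultimately show ?thesis unfolding complexification_def
    by (intro CollectI exI[of _ "mat 1"] exI[of _ "s *\<^sub>R J"]) simp
qed

lemma omega_add1: "omega (x + y) z = omega x z + omega y z" by (simp add: omega_bil bil_add1)
lemma omega_add2: "omega z (x + y) = omega z x + omega z y" by (simp add: omega_bil bil_add2 matrix_vector_right_distrib)
lemma omega_smult1: "omega (c *s x) z = c * omega x z" by (simp add: omega_bil bil_smult1)
lemma mat_vec_smult: "(A::'n::finite cmat) *v (c *s x) = c *s (A *v x)"
  by (simp add: matrix_vector_mult_def vec_eq_iff sum_distrib_left algebra_simps)
lemma omega_smult2: "omega z (c *s x) = c * omega z x"
  by (simp add: omega_bil bil_smult2 mat_vec_smult)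
lemma omega_antisym: "omega x y = - omega y x" unfolding omega_def by (simp add: sum_negf[symmetric] algebra_simps)
lemma omega_self: "omega x x = 0" using omega_antisym[of x x] by simp

lemma scaleR_smult_vec: "r *\<^sub>R (x::'n::finite cvec) = (of_real r) *s x"
proof -
  have "\<And>i. (r *\<^sub>R x)$i = of_real r * x$i" by (metis vector_scaleR_component scaleR_conv_of_real)
  then show ?thesis by (simp add: vec_eq_iff)
qed

lemma cconj_smult: "cconj (c *s x) = cnj c *s cconj x" by (simp add: cconj_def vec_eq_iff)
lemma cconj_scaleR: "cconj (r *\<^sub>R x) = r *\<^sub>R cconj x" by (simp add: scaleR_smult_vec cconj_smult)

lemma herm_add1: "herm (x + y) z = herm x z + herm y z" by (simp add: herm_def omega_add1 algebra_simps)
lemma herm_add2: "herm z (x + y) = herm z x + herm z y" by (simp add: herm_def cconj_add omega_add2 algebra_simps)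
lemma herm_smult1: "herm (c *s x) z = c * herm x z" by (simp add: herm_def omega_smult1)
lemma herm_smult2: "herm z (c *s x) = cnj c * herm z x" by (simp add: herm_def cconj_smult omega_smult2)
lemma herm_scaleR1: "herm (r *\<^sub>R x) z = of_real r * herm x z" by (simp add: scaleR_smult_vec herm_smult1)
lemma herm_scaleR2: "herm z (r *\<^sub>R x) = of_real r * herm z x" by (simp add: scaleR_smult_vec herm_smult2)

lemma herm_expand:
  "herm (r *\<^sub>R x + q *\<^sub>R y) (r *\<^sub>R x + q *\<^sub>R y) =
     of_real (r * r) * herm x x + of_real (r * q) * (herm x y + herm y x) + of_real (q * q) * herm y y"
  by (simp add: herm_add1 herm_add2 herm_scaleR1 herm_scaleR2 algebra_simps)

lemma herm_SpR: assumes "g \<in> SpR" shows "herm (g *v x) (g *v y) = herm x y"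
proof -
  have r: "realm g" and s: "sympl g" using assms by (auto simp: SpR_iff)
  have "omega (g *v x) (cconj (g *v y)) = omega (g *v x) (g *v cconj y)" using r by (simp add: cconj_real_mult)
  also have "\<dots> = bil x ((transpose g ** Om ** g) *v cconj y)" by (rule omega_mat)
  also have "\<dots> = omega x (cconj y)" using s by (simp add: sympl_def omega_bil)
  finally show ?thesis by (simp add: herm_def)
qed

lemma herm_zero1: "herm 0 z = 0" by (simp add: herm_def omega_bil)
lemma cconj_zero: "cconj 0 = 0" by (simp add: cconj_def vec_eq_iff)
lemma herm_zero2: "herm z 0 = 0" by (simp add: herm_def omega_bil cconj_zero)
lemma herm_sum1: "finite B \<Longrightarrow> herm (\<Sum>b\<in>B. f b) z = (\<Sum>b\<in>B. herm (f b) z)"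
  by (induction B rule: finite_induct) (simp_all add: herm_add1 herm_zero1)
lemma herm_sum2: "finite B \<Longrightarrow> herm z (\<Sum>b\<in>B. f b) = (\<Sum>b\<in>B. herm z (f b))"
  by (induction B rule: finite_induct) (simp_all add: herm_add2 herm_zero2)

lemma sig_nonpos:
  assumes sig: "herm_signature V 0 m" and x: "x \<in> V"
  shows "Re (herm x x) \<le> 0"
proof -
  obtain B where fB: "finite B" and sp: "vec.span B = V"
    and orth: "\<forall>b\<in>B. \<forall>b'\<in>B. b \<noteq> b' \<longrightarrow> herm b b' = 0"
    and c0: "card {b\<in>B. Re (herm b b) > 0} = 0"
    using sig unfolding herm_signature_def by blast
  have np: "Re (herm b b) \<le> 0" if "b \<in> B" for b
  proof -
    have "{b\<in>B. Re (herm b b) > 0} = {}" using c0 fB by simp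
    then show ?thesis using that by (auto simp: not_less)
  qed
  obtain u where xu: "x = (\<Sum>b\<in>B. u b *s b)"
    using x sp vec.span_finite[OF fB] by auto
  have "herm x x = (\<Sum>b\<in>B. \<Sum>c\<in>B. u b * cnj (u c) * herm b c)"
    unfolding xu by (simp add: herm_sum1 herm_sum2 fB herm_smult1 herm_smult2 sum_distrib_left algebra_simps)
      (rule sum.swap)
  also have "\<dots> = (\<Sum>b\<in>B. u b * cnj (u b) * herm b b)"
  proof (rule sum.cong[OF refl])
    fix b assume b: "b \<in> B"
    have "(\<Sum>c\<in>B. u b * cnj (u c) * herm b c) = (\<Sum>c\<in>B. if c = b then u b * cnj (u b) * herm b b else 0)"
      using orth b by (intro sum.cong) auto
    also have "\<dots> = u b * cnj (u b) * herm b b" using b fB by simp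
    finally show "(\<Sum>c\<in>B. u b * cnj (u c) * herm b c) = u b * cnj (u b) * herm b b" .
  qed
  finally have "Re (herm x x) = (\<Sum>b\<in>B. (cmod (u b))^2 * Re (herm b b))"
    by (simp add: Re_sum complex_norm_square[symmetric])
  also have "\<dots> \<le> 0" by (intro sum_nonpos mult_nonneg_nonpos np) auto
  finally show ?thesis .
qed

lemma exists_nonzero:
  assumes "cdim V = m" "0 < m" shows "\<exists>v\<in>V. v \<noteq> 0"
proof (rule ccontr)
  assume "\<not> (\<exists>v\<in>V. v \<noteq> 0)"
  then have "V \<subseteq> {0}" by auto
  then have "vec.dim V = 0" using vec.dim_eq_0[of V] by blast
  then show False using assms unfolding cdim_def by linarith
qed

lemma act_fst: "fst (act g z) = (*v) g ` fst z" by (simp add: act_def)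
lemma act_snd: "snd (act g z) = (*v) g ` snd z" by (simp add: act_def)

lemma iJ_mv: "iJ J *v x = \<i> *s (J *v x)"
  by (simp add: iJ_def matrix_vector_mult_def vec_eq_iff sum_distrib_left mult.assoc)

lemma mat_vec_neg_right: "(A::'n::finite cmat) *v (- x) = - (A *v x)"
  by (simp add: matrix_vector_mult_def vec_eq_iff sum_negf)
lemma mat_vec_scaleR_right: "(A::'n::finite cmat) *v (r *\<^sub>R x) = r *\<^sub>R (A *v x)"
  by (simp add: scaleR_smult_vec mat_vec_smult)

lemma choose_s:
  fixes A C B :: real assumes B: "B > 0"
  shows "\<exists>s. exp s * exp s * A + C + exp (- s) * exp (- s) * B > 0"
proof -
  define R where "R = (\<bar>A\<bar> + \<bar>C\<bar> + 1) / B + 1"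
  have R1: "R \<ge> 1" unfolding R_def using B by simp
  define s where "s = - ln R / 2"
  have e1: "exp s * exp s = 1 / R"
  proof -
    have "exp s * exp s = exp (s + s)" by (rule exp_add[symmetric])
    also have "s + s = - ln R" unfolding s_def by simp
    finally show ?thesis using R1 by (simp add: exp_minus inverse_eq_divide)
  qed
  have e2: "exp (- s) * exp (- s) = R"
  proof -
    have "exp (- s) * exp (- s) = exp (- s + - s)" by (rule exp_add[symmetric])
    also have "- s + - s = ln R" unfolding s_def by simp
    finally show ?thesis using R1 by simp
  qed
  have a: "1 / R * A \<ge> - \<bar>A\<bar>"
  proof -
    have "\<bar>1 / R * A\<bar> = \<bar>A\<bar> / R" using R1 by (simp add: abs_mult)
    also have "\<dots> \<le> \<bar>A\<bar>" using R1 by (simp add: divide_le_eq) (metis abs_ge_zero mult.right_neutral mult_left_mono)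
    finally have "\<bar>1 / R * A\<bar> \<le> \<bar>A\<bar>" .
    then show ?thesis by linarith
  qed
  have "R * B = \<bar>A\<bar> + \<bar>C\<bar> + 1 + B" unfolding R_def using B by (simp add: field_simps)
  then have "1 / R * A + C + R * B > 0" using a B by linarith
  then show ?thesis using e1 e2 by metis
qed

lemma herm_qf:
  assumes rJ: "realm J" and PJ: "P ** J = Om" and sP: "transpose P = P" and Jb: "J *v b = \<i> *s b"
  shows "herm b b = qf P b"
proof -
  have "J *v cconj b = - \<i> *s cconj b" using rJ Jb by (simp add: cconj_real_mult[symmetric] cconj_smult)
  then have "Om *v cconj b = - \<i> *s (P *v cconj b)"
    by (simp add: PJ[symmetric] matrix_vector_mul_assoc[symmetric] mat_vec_smult mat_vec_neg_right)
  then have "herm b b = \<i> * (- \<i>) * bil b (P *v cconj b)"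
    by (simp add: herm_def omega_bil bil_smult2 bil_neg2)
  also have "\<dots> = bil b (P *v cconj b)" by simp
  also have "\<dots> = bil (transpose P *v b) (cconj b)" by (simp only: bil_mat transpose_transpose)
  also have "\<dots> = qf P b" by (simp add: sP qf_def bil_sym)
  finally show ?thesis .
qed

lemma V1_eigen:
  fixes J P :: "'n::finite cmat" and K :: "'n cmat set" and z0 :: "'n flag"
  assumes rJ: "realm J" and jj: "J ** J = - mat 1" and sJ: "sympl J" and PJ: "P ** J = Om"
    and sP: "transpose P = P" and pd: "PD P" and KG: "K = GJ J"
    and np: "\<And>x. x \<in> fst z0 \<Longrightarrow> Re (herm x x) \<le> 0"
    and bc: "orbit (complexification K) z0 = orbit K z0"
    and v: "v \<in> fst z0"
  shows "J *v v = - \<i> *s v"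
proof -
  define Pi1 where "Pi1 = (1/2) *\<^sub>R (mat 1 + iJ J)"
  define Pi2 where "Pi2 = (1/2) *\<^sub>R (mat 1 - iJ J)"
  define a where "a = Pi1 *v v"
  define b where "b = Pi2 *v v"
  have bdef: "b = (1/2) *\<^sub>R (v - \<i> *s (J *v v))"
    unfolding b_def Pi2_def by (simp add: mat_vec_scaleR matrix_vector_mult_diff_rdistrib iJ_mv)
  have JJv: "J *v (J *v v) = - v" by (simp add: matrix_vector_mul_assoc jj mat_vec_neg)
  have Jb: "J *v b = \<i> *s b"
  proof -
    have "J *v b = (1/2) *\<^sub>R (J *v v + \<i> *s v)"
      unfolding bdef by (simp add: mat_vec_scaleR_right matrix_vector_mult_diff_distrib mat_vec_smult JJv)
    also have "\<dots> = \<i> *s b" unfolding bdef by (simp add: vec_eq_iff algebra_simps scaleR_conv_of_real)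
    finally show ?thesis .
  qed
  have hb: "herm b b = qf P b" using herm_qf[OF rJ PJ sP Jb] .
  define E where "E s = exp s *\<^sub>R Pi1 + exp (- s) *\<^sub>R Pi2" for s
  have Ev: "E s *v v = exp s *\<^sub>R a + exp (- s) *\<^sub>R b" for s
    unfolding E_def a_def b_def by (simp add: matrix_vector_mult_add_rdistrib mat_vec_scaleR)
  have hE: "Re (herm (E s *v v) (E s *v v)) \<le> 0" for s
  proof -
    have "E s \<in> complexification K" unfolding E_def Pi1_def Pi2_def KG by (rule complexif_J[OF rJ sJ jj])
    then have "act (E s) z0 \<in> orbit (complexification K) z0" unfolding orbit_def by blast
    then have "act (E s) z0 \<in> orbit K z0" using bc by simp
    then obtain k where k: "k \<in> K" and ek: "act (E s) z0 = act k z0" unfolding orbit_def by blast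
    have "E s *v v \<in> fst (act (E s) z0)" using v by (simp add: act_fst)
    then have "E s *v v \<in> (*v) k ` fst z0" using ek by (simp add: act_fst)
    then obtain v' where v': "v' \<in> fst z0" and "E s *v v = k *v v'" by blast
    moreover have "k \<in> SpR" using k KG GJ_SpR by blast
    ultimately have "herm (E s *v v) (E s *v v) = herm v' v'" using herm_SpR by metis
    then show ?thesis using np[OF v'] by simp
  qed
  have b0: "b = 0"
  proof (rule ccontr)
    assume "b \<noteq> 0"
    then have Bp: "Re (herm b b) > 0" using pd hb by (simp add: PD_def)
    obtain s where s: "exp s * exp s * Re (herm a a) + Re (herm a b + herm b a) + exp (- s) * exp (- s) * Re (herm b b) > 0"
      using choose_s[OF Bp] by blast
    have "Re (herm (E s *v v) (E s *v v)) = exp s * exp s * Re (herm a a) + exp s * exp (- s) * Re (herm a b + herm b a) + exp (- s) * exp (- s) * Re (herm b b)"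
      unfolding Ev herm_expand by simp
    also have "exp s * exp (- s) = 1" by (simp add: exp_minus)
    finally show False using s hE[of s] by simp
  qed
  then have "v = \<i> *s (J *v v)" unfolding bdef by (simp add: vec_eq_iff)
  then have "- \<i> *s v = - \<i> *s (\<i> *s (J *v v))" by simp
  also have "\<dots> = J *v v" by (simp add: vec_eq_iff)
  finally show ?thesis by simp
qed

lemma omega_neg1: "omega (- x) y = - omega x y" by (simp add: omega_bil bil_neg1)
lemma omega_neg2: "omega x (- y) = - omega x y" by (simp add: omega_bil bil_neg2 mat_vec_neg_right)

lemma omega_J_zero:
  assumes sJ: "sympl J" and Jv: "J *v v = - \<i> *s v" and Ju: "J *v u = - \<i> *s u"
  shows "omega v u = 0"
proof -
  have "omega (J *v v) (J *v u) = bil v ((transpose J ** Om ** J) *v u)" by (rule omega_mat)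
  also have "\<dots> = omega v u" using sJ by (simp add: sympl_def omega_bil)
  finally have "omega (J *v v) (J *v u) = omega v u" .
  moreover have "omega (J *v v) (J *v u) = - omega v u"
    by (simp add: Jv Ju omega_smult1 omega_smult2 omega_neg1 omega_neg2)
  ultimately show ?thesis by simp
qed

lemma sympl_of_omega:
  assumes "\<And>v w. omega (g *v v) (g *v w) = omega v w" shows "sympl g"
proof -
  have "bil v ((transpose g ** Om ** g) *v w) = bil v (Om *v w)" for v w
    using assms by (metis omega_mat omega_bil)
  then show ?thesis unfolding sympl_def by (rule mat_eq_bil)
qed

lemma omega_axis: "omega (axis k 1) y = (Om *v y) $ k"
  by (simp add: omega_bil bil_axis)

lemma nondeg: assumes "y \<noteq> 0" shows "\<exists>u. omega u y \<noteq> 0"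
proof -
  obtain k where k: "y $ k \<noteq> 0" using assms by (auto simp: vec_eq_iff)
  show ?thesis
  proof (cases k)
    case (Inl a)
    have "omega (axis (Inr a) 1) y = - y $ Inl a" by (simp add: omega_axis Om_mult)
    then show ?thesis using k Inl by (metis neg_equal_0_iff_equal)
  next
    case (Inr a)
    have "omega (axis (Inl a) 1) y = y $ Inr a" by (simp add: omega_axis Om_mult)
    then show ?thesis using k Inr by metis
  qed
qed

lemma nondeg2:
  assumes x: "x \<noteq> 0" and y: "y \<noteq> 0"
  shows "\<exists>u. omega u y \<noteq> 0 \<and> omega x u \<noteq> 0"
proof -
  obtain u1 where u1: "omega u1 y \<noteq> 0" using nondeg[OF y] by blast
  obtain u2 where "omega u2 x \<noteq> 0" using nondeg[OF x] by blast
  then have u2: "omega x u2 \<noteq> 0" using omega_antisym[of x u2] by simp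
  show ?thesis
  proof (cases "omega x u1 = 0")
    case False then show ?thesis using u1 by blast
  next
    case x1: True
    show ?thesis
    proof (cases "omega u2 y = 0")
      case False then show ?thesis using u2 by blast
    next
      case True
      have "omega (u1 + u2) y \<noteq> 0" using u1 True by (simp add: omega_add1)
      moreover have "omega x (u1 + u2) \<noteq> 0" using u2 x1 by (simp add: omega_add2)
      ultimately show ?thesis by blast
    qed
  qed
qed

definition Tm :: "'n::finite cvec \<Rightarrow> 'n cmat" where
  "Tm u = (\<chi> i j. u $ i * (transpose Om *v u) $ j)"

lemma Tm_mv: "Tm u *v v = omega u v *s u"
proof -
  define r where "r = transpose Om *v u"
  have b: "bil r v = omega u v" unfolding r_def by (simp only: bil_mat transpose_transpose omega_bil)
  have T: "Tm u = (\<chi> i j. u$i * r$j)" unfolding Tm_def r_def ..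
  have "(Tm u *v v) $ i = u $ i * bil r v" for i
    unfolding T bil_def matrix_vector_mult_def by (simp add: sum_distrib_left mult.assoc)
  then show ?thesis using b by (simp add: vec_eq_iff mult.commute)
qed

definition gt :: "real \<Rightarrow> 'n::finite cvec \<Rightarrow> 'n cmat" where
  "gt t u = mat 1 + t *\<^sub>R Tm u"

lemma gt_mv: "gt t u *v v = v + (of_real t * omega u v) *s u"
  by (simp add: gt_def matrix_vector_mult_add_rdistrib mat_vec_scaleR Tm_mv scaleR_smult_vec)

lemma gt_SpC: "gt t u \<in> SpC"
proof -
  have "omega (gt t u *v v) (gt t u *v w) = omega v w" for v w
  proof -
    have uu: "omega u u = 0" by (rule omega_self)
    have vu: "omega v u = - omega u v" by (rule omega_antisym)
    show ?thesis
      by (simp add: gt_mv omega_add1 omega_add2 omega_smult1 omega_smult2 uu vu algebra_simps)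
  qed
  then show ?thesis by (simp add: SpC_iff sympl_of_omega)
qed

lemma act_comp: "act (a ** b) z = act a (act b z)"
  by (simp add: act_def image_image matrix_vector_mul_assoc)

lemma act_id: "act (mat 1) z = z" by (simp add: act_def)

theorem proposition3p3:
  fixes m a :: nat
  assumes "0 < m" and "m \<le> a" and "a < CARD('n::finite)"
  shows "\<not> generically_1_connected m (Ddom m a :: 'n flag set)"
proof
  assume "generically_1_connected m (Ddom m a :: 'n flag set)"
  then obtain K0 C0 z w where mc: "max_compact_subgroup K0" and bcyc: "base_cycle K0 (Ddom m a :: 'n flag set) C0"
    and zC: "z \<in> C0" and op: "openZ m (orbit (isotropy z) w)"
    and ne: "C0 \<inter> orbit (isotropy z) w \<noteq> {}"
    unfolding generically_1_connected_def by blast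
  define Orb where "Orb = orbit (isotropy z) w"
  obtain z0 where z0D: "z0 \<in> (Ddom m a :: 'n flag set)" and C0: "C0 = orbit K0 z0"
    and bc: "orbit (complexification K0) z0 = orbit K0 z0"
    using bcyc unfolding base_cycle_def by blast
  obtain J P c where rJ: "realm J" and jj: "J ** J = - mat 1" and sJ: "sympl J" and PJ: "P ** J = Om"
    and rP: "realm P" and sP: "transpose P = P" and c0: "c > 0"
    and bd: "\<forall>x. (norm x)^2 \<le> c * Re (qf P x)" and KG: "K0 = GJ J"
    using J_exists[OF mc] by blast
  have pd: "PD P" unfolding PD_def
  proof (intro allI impI)
    fix x :: "'n cvec" assume "x \<noteq> 0"
    then have "0 < (norm x)^2" by simp
    also have "\<dots> \<le> c * Re (qf P x)" using bd by blast
    finally show "Re (qf P x) > 0" using c0 by (simp add: zero_less_mult_iff)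
  qed
  have K0g: "matgroup K0" and K0S: "K0 \<subseteq> SpR" using mc by (auto simp: max_compact_subgroup_def)
  have sig: "herm_signature (fst z0) 0 m" and cd: "cdim (fst z0) = m"
    using z0D by (auto simp: Ddom_def Zflag_def)
  have np: "\<And>x. x \<in> fst z0 \<Longrightarrow> Re (herm x x) \<le> 0" using sig_nonpos[OF sig] by blast
  have eig: "\<And>v. v \<in> fst z0 \<Longrightarrow> J *v v = - \<i> *s v"
    using V1_eigen[OF rJ jj sJ PJ sP pd KG np bc] by blast
  have orth0: "omega v (k *v u) = 0" if k: "k \<in> K0" and v: "v \<in> fst z0" and u: "u \<in> fst z0" for k v u
  proof -
    have kJ: "k ** J = J ** k" using k KG by (simp add: GJ_def)
    have "J *v (k *v u) = k *v (J *v u)" by (simp add: matrix_vector_mul_assoc kJ)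
    also have "\<dots> = - \<i> *s (k *v u)" using eig[OF u] by (simp add: mat_vec_smult mat_vec_neg_right)
    finally show ?thesis using omega_J_zero[OF sJ eig[OF v]] by blast
  qed
  obtain k1 where k1: "k1 \<in> K0" and zk: "z = act k1 z0" using zC C0 unfolding orbit_def by blast
  obtain z' where z'C: "z' \<in> C0" and z'Orb: "z' \<in> Orb" using ne unfolding Orb_def by blast
  obtain k2 where k2: "k2 \<in> K0" and zk2: "z' = act k2 z0" using z'C C0 unfolding orbit_def by blast
  have Kinv: "\<And>k. k \<in> K0 \<Longrightarrow> invertible k \<and> matrix_inv k \<in> K0" and Kmul: "\<And>x y. x \<in> K0 \<Longrightarrow> y \<in> K0 \<Longrightarrow> x ** y \<in> K0"
    using K0g by (auto simp: matgroup_def)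
  have Ksym: "\<And>k. k \<in> K0 \<Longrightarrow> sympl k" using K0S by (auto simp: SpR_iff)
  have orth: "omega x y = 0" if x: "x \<in> fst z" and y: "y \<in> fst z'" for x y
  proof -
    obtain v where v: "v \<in> fst z0" and xv: "x = k1 *v v" using x zk by (auto simp: act_fst)
    obtain u where u: "u \<in> fst z0" and yu: "y = k2 *v u" using y zk2 by (auto simp: act_fst)
    define h where "h = matrix_inv k1 ** k2"
    have hK: "h \<in> K0" unfolding h_def using Kinv Kmul k1 k2 by blast
    have "k1 ** h = k2" unfolding h_def using Kinv[OF k1] by (simp add: matrix_mul_assoc inv_right)
    then have "y = k1 *v (h *v u)" by (simp add: yu matrix_vector_mul_assoc)
    then have "omega x y = bil v ((transpose k1 ** Om ** k1) *v (h *v u))" by (simp add: xv omega_mat)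
    also have "\<dots> = omega v (h *v u)" using Ksym[OF k1] by (simp add: sympl_def omega_bil)
    also have "\<dots> = 0" using orth0[OF hK v u] .
    finally show ?thesis .
  qed
  obtain q0 where q0: "q0 \<in> isotropy z" and z'w: "z' = act q0 w" using z'Orb unfolding Orb_def orbit_def by blast
  have isoS: "\<And>q. q \<in> isotropy z \<Longrightarrow> sympl q \<and> act q z = z" by (auto simp: isotropy_def SpC_iff)
  have Oorth: "omega x y = 0" if e: "e \<in> Orb" and x: "x \<in> fst z" and y: "y \<in> fst e" for e x y
  proof -
    obtain q where q: "q \<in> isotropy z" and ew: "e = act q w" using e unfolding Orb_def orbit_def by blast
    have sq0: "sympl q0" and aq0: "act q0 z = z" using isoS[OF q0] by auto
    have sq: "sympl q" and aq: "act q z = z" using isoS[OF q] by auto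
    have iq0: "invertible q0" using sq0 sympl_invertible by blast
    define r where "r = q ** matrix_inv q0"
    have sr: "sympl r" unfolding r_def using sq sympl_inv[OF sq0] sympl_mult by blast
    have w': "act (matrix_inv q0) z' = w" using z'w by (simp add: act_comp[symmetric] inv_left[OF iq0] act_id)
    have z'': "act (matrix_inv q0) z = z"
      using aq0 by (metis act_comp act_id inv_left[OF iq0])
    have er: "e = act r z'" unfolding r_def by (simp add: act_comp w' ew)
    have zr: "act r z = z" unfolding r_def by (simp add: act_comp z'' aq)
    obtain x' where x': "x' \<in> fst z" and xx: "x = r *v x'"
      using x zr by (metis act_fst imageE)
    obtain y' where y': "y' \<in> fst z'" and yy: "y = r *v y'"
      using y er by (auto simp: act_fst)
    have "omega x y = bil x' ((transpose r ** Om ** r) *v y')" by (simp add: xx yy omega_mat)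
    also have "\<dots> = omega x' y'" using sr by (simp add: sympl_def omega_bil)
    also have "\<dots> = 0" using orth[OF x' y'] .
    finally show ?thesis .
  qed
  have OZ: "Orb \<subseteq> Zflag m" and opn: "\<forall>zz\<in>Zflag m. openin (top_of_set SpC) {g \<in> SpC. act g zz \<in> Orb}"
    using op unfolding openZ_def Orb_def by auto
  have "openin (top_of_set SpC) {g \<in> SpC. act g z' \<in> Orb}" using opn OZ z'Orb by blast
  moreover have "mat 1 \<in> {g \<in> SpC. act g z' \<in> Orb}" using z'Orb by (simp add: act_id SpC_iff sympl_mat1)
  ultimately obtain e where e0: "e > 0" and eb: "\<And>g. g \<in> SpC \<Longrightarrow> dist g (mat 1) < e \<Longrightarrow> act g z' \<in> Orb"
    unfolding openin_euclidean_subtopology_iff by blast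
  obtain v0 where v0: "v0 \<in> fst z0" and v00: "v0 \<noteq> 0" using exists_nonzero[OF cd assms(1)] by blast
  define x where "x = k1 *v v0"
  define y where "y = k2 *v v0"
  have xz: "x \<in> fst z" unfolding x_def using zk v0 by (simp add: act_fst)
  have yz: "y \<in> fst z'" unfolding y_def using zk2 v0 by (simp add: act_fst)
  have x0: "x \<noteq> 0" unfolding x_def using Kinv[OF k1] v00 inj_matrix_vector_mult
    by (metis injD matrix_vector_mult_0_right)
  have y0: "y \<noteq> 0" unfolding y_def using Kinv[OF k2] v00 inj_matrix_vector_mult
    by (metis injD matrix_vector_mult_0_right)
  obtain u where u1: "omega u y \<noteq> 0" and u2: "omega x u \<noteq> 0" using nondeg2[OF x0 y0] by blast
  define t where "t = e / (2 * (norm (Tm u) + 1))"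
  have t0: "t > 0" unfolding t_def using e0 by (simp add: add_nonneg_pos)
  have "dist (gt t u) (mat 1) = t * norm (Tm u)" by (simp add: gt_def dist_norm t0 less_imp_le)
  also have "\<dots> < e"
  proof -
    have "t * norm (Tm u) \<le> t * (norm (Tm u) + 1)" using t0 by simp
    also have "\<dots> = e / 2"
    proof -
      have d: "norm (Tm u) + 1 \<noteq> 0" using norm_ge_zero[of "Tm u"] by linarith
      show ?thesis unfolding t_def using d by (simp add: field_simps)
    qed
    finally show ?thesis using e0 by simp
  qed
  finally have "act (gt t u) z' \<in> Orb" using eb gt_SpC by blast
  moreover have "gt t u *v y \<in> fst (act (gt t u) z')" using yz by (simp add: act_fst)
  ultimately have "omega x (gt t u *v y) = 0" using Oorth xz by blast
  moreover have "omega x (gt t u *v y) = of_real t * omega u y * omega x u"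
    using orth[OF xz yz] by (simp add: gt_mv omega_add2 omega_smult2)
  ultimately show False using t0 u1 u2 by simp
qed

end
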